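(* Let $0<p<\infty$, let $\mu$ be a finite positive Borel measure on the closed unit disc $\overline{\mathbb{D}}$, and let $l$ be any positive integer with $pl>1$. For $\lambda\in\mathbb{D}$ put $k_\lambda(z)=\frac{1}{1-\overline{\lambda}z}$ and $K_\lambda=k_\lambda^l/\|k_\lambda^l\|_{H^p}$. The following are equivalent: (i) there is $C>0$ with $\int_{\overline{\mathbb{D}}}|f|^p\,d\mu\ge C\|f\|_{H^p}^p$ for all $f\in C(\overline{\mathbb{D}})\cap H^p$; (ii) there is $C>0$ with $\int_{\overline{\mathbb{D}}}|K_\lambda|^p\,d\mu\ge C$ for all $\lambda\in\mathbb{D}$; (iii) there is $C>0$ with $\mu(I)\ge C\,m(I)$ for all arcs $I\subset\partial\mathbb{D}$.
   Context: $H^p=H^p(\mathbb{D})$ ($0<p<\infty$) is the space of holomorphic $f$ on the unit disc $\mathbb{D}$ with $\|f\|_{H^p}^p=\sup_{0<r<1}\int_0^1|f(re^{2\pi it})|^p\,dt<\infty$. $m$ denotes normalized Lebesgue (arc-length) measure on $\partial\mathbb{D}$. For $f\in C(\overline{\mathbb{D}})$ the integral over $\overline{\mathbb{D}}$ uses the values of $f$ on the closed disc. *)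

theory Defs
  imports "HOL-Analysis.Analysis"
begin

definition hardy_pow :: "real \<Rightarrow> (complex \<Rightarrow> complex) \<Rightarrow> ennreal" where
  "hardy_pow p f = (SUP r\<in>{0<..<1::real}.
      (\<integral>\<^sup>+ t\<in>{0..1::real}. ennreal (cmod (f (complex_of_real r * cis (2 * pi * t))) powr p) \<partial>lborel))"

definition in_hardy :: "real \<Rightarrow> (complex \<Rightarrow> complex) \<Rightarrow> bool" where
  "in_hardy p f \<longleftrightarrow> f holomorphic_on ball 0 1 \<and> hardy_pow p f < \<infinity>"

definition hardy_norm :: "real \<Rightarrow> (complex \<Rightarrow> complex) \<Rightarrow> real" where
  "hardy_norm p f = enn2real (hardy_pow p f) powr (1 / p)"

definition circle_measure :: "complex measure" where
  "circle_measure = distr (restrict_space lborel {0..1::real}) borel (\<lambda>t. cis (2 * pi * t))"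

text \<open>Arcs of the unit circle (open, closed or half-open, nondegenerate).\<close>
definition is_arc :: "complex set \<Rightarrow> bool" where
  "is_arc I \<longleftrightarrow> (\<exists>a b::real. a < b \<and> b \<le> a + 1 \<and>
      (\<lambda>t. cis (2 * pi * t)) ` {a<..<b} \<subseteq> I \<and> I \<subseteq> (\<lambda>t. cis (2 * pi * t)) ` {a..b})"

definition kernel :: "complex \<Rightarrow> complex \<Rightarrow> complex" where
  "kernel a z = 1 / (1 - cnj a * z)"

definition norm_kernel :: "real \<Rightarrow> nat \<Rightarrow> complex \<Rightarrow> complex \<Rightarrow> complex" where
  "norm_kernel p l a z = kernel a z ^ l / complex_of_real (hardy_norm p (\<lambda>w. kernel a w ^ l))"

end

theory Submission
  imports Defs "HOL-Complex_Analysis.Complex_Analysis"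
begin

lemma circlepath_cis: "circlepath 0 \<rho> t = complex_of_real \<rho> * cis (2*pi*t)"
  by (simp add: circlepath cis_conv_exp mult_ac)

lemma vd_circ: "vector_derivative (circlepath 0 \<rho>) (at t) = 2*pi*\<i>*(complex_of_real \<rho> * cis (2*pi*t))"
  by (simp add: vector_derivative_circlepath cis_conv_exp mult_ac)

lemma cauchy_01:
  assumes "H holomorphic_on ball 0 R" "0 < \<rho>" "\<rho> < R" "norm z < \<rho>"
  shows "((\<lambda>t. H (of_real \<rho> * cis (2*pi*t)) * (of_real \<rho> * cis (2*pi*t)) / (of_real \<rho> * cis (2*pi*t) - z))
          has_integral H z) {0..1}"
proof -
  have "H holomorphic_on cball 0 \<rho>" using assms(1) by (rule holomorphic_on_subset) (use assms in auto)
  from Cauchy_integral_circlepath_simple[OF this, of z] assms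
  have "((\<lambda>u. H u/(u-z)) has_contour_integral (2 * of_real pi * \<i> * H z)) (circlepath 0 \<rho>)" by simp
  hence "((\<lambda>t. H (circlepath 0 \<rho> t)/(circlepath 0 \<rho> t - z) * vector_derivative (circlepath 0 \<rho>) (at t))
     has_integral (2 * of_real pi * \<i> * H z)) {0..1}" by (simp add: has_contour_integral)
  hence "((\<lambda>t. (2 * of_real pi * \<i>) * (H (of_real \<rho> * cis (2*pi*t)) * (of_real \<rho> * cis (2*pi*t)) / (of_real \<rho> * cis (2*pi*t) - z)))
     has_integral (2 * of_real pi * \<i>) * H z) {0..1}" by (simp add: circlepath_cis vd_circ mult_ac)
  from has_integral_mult_right[OF this, of "1 / (2 * of_real pi * \<i>)"]
  show ?thesis by simp
qed

lemma cauchy_zero_01: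
  assumes "H holomorphic_on ball 0 R" "0 < \<rho>" "\<rho> < R" "norm z < \<rho>"
  shows "((\<lambda>t. H (of_real \<rho> * cis (2*pi*t)) * (cnj z * (of_real \<rho> * cis (2*pi*t))) / (of_real (\<rho>^2) - cnj z * (of_real \<rho> * cis (2*pi*t))))
          has_integral 0) {0..1}"
proof (cases "z = 0")
  case True then show ?thesis by simp
next
  case False
  define S :: "complex set" where "S = ball 0 R \<inter> ball 0 (\<rho>^2 / norm z)"
  have cS: "convex S" unfolding S_def by (intro convex_Int convex_ball)
  have nz: "of_real (\<rho>^2) - cnj z * u \<noteq> 0" if "u \<in> S" for u :: complex
  proof
    assume "of_real (\<rho>^2) - cnj z * u = 0"
    hence "norm (cnj z * u) = \<rho>^2" by (metis eq_iff_diff_eq_0 norm_of_real abs_power2 power2_abs abs_of_nonneg zero_le_power2 )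
    moreover have "norm u < \<rho>^2 / norm z" using that by (simp add: S_def)
    hence "norm z * norm u < \<rho>^2" using False by (simp add: field_simps)
    ultimately show False by (simp add: norm_mult)
  qed
  have hol: "(\<lambda>u. H u * cnj z / (of_real (\<rho>^2) - cnj z * u)) holomorphic_on S"
    using nz by (intro holomorphic_intros holomorphic_on_subset[OF assms(1)]) (auto simp: S_def)
  have "path_image (circlepath 0 \<rho>) \<subseteq> S"
  proof -
    have "\<rho> < \<rho>^2 / norm z" using assms False by (simp add: field_simps power2_eq_square)
    thus ?thesis using assms by (auto simp: S_def path_image_circlepath)
  qed
  from Cauchy_theorem_convex_simple[OF hol cS valid_path_circlepath this]
  have "((\<lambda>u. H u * cnj z / (of_real (\<rho>^2) - cnj z * u)) has_contour_integral 0) (circlepath 0 \<rho>)" by simp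
  hence "((\<lambda>t. (2 * of_real pi * \<i>) * (H (of_real \<rho> * cis (2*pi*t)) * (cnj z * (of_real \<rho> * cis (2*pi*t))) / (of_real (\<rho>^2) - cnj z * (of_real \<rho> * cis (2*pi*t)))))
     has_integral 0) {0..1}" by (simp add: has_contour_integral circlepath_cis vd_circ mult_ac)
  from has_integral_mult_right[OF this, of "1 / (2 * of_real pi * \<i>)"]
  show ?thesis by simp
qed

definition poisk :: "real \<Rightarrow> complex \<Rightarrow> real \<Rightarrow> real" where
  "poisk \<rho> z t = (\<rho>^2 - (cmod z)^2) / (cmod (of_real \<rho> * cis (2*pi*t) - z))^2"

lemma poisk_identity:
  assumes "cmod w = \<rho>" "cmod z < \<rho>"
  shows "w / (w - z) + cnj z * w / (of_real (\<rho>^2) - cnj z * w) = of_real ((\<rho>^2 - (cmod z)^2) / (cmod (w - z))^2)"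
proof -
  have wz: "w - z \<noteq> 0" using assms by auto
  hence cwz: "cnj w - cnj z \<noteq> 0" by (metis complex_cnj_diff complex_cnj_zero_iff)
  have ww: "w * cnj w = of_real (\<rho>^2)" using assms(1) complex_norm_square[of w] by metis
  have zz: "z * cnj z = of_real ((cmod z)^2)" using complex_norm_square[of z] by metis
  have d: "of_real (\<rho>^2) - cnj z * w = w * (cnj w - cnj z)" using ww by (simp add: algebra_simps)
  have w0: "w \<noteq> 0" using assms by auto
  have n2: "of_real ((cmod (w - z))^2) = (w - z) * (cnj w - cnj z)"
    using complex_norm_square[of "w - z"] by simp
  have "w / (w - z) + cnj z * w / (of_real (\<rho>^2) - cnj z * w) = w / (w - z) + cnj z / (cnj w - cnj z)"
    using d w0 by simp
  also have "\<dots> = (w * cnj w - z * cnj z) / ((w - z) * (cnj w - cnj z))"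
    using wz cwz by (simp add: field_simps)
  also have "\<dots> = of_real ((\<rho>^2 - (cmod z)^2) / (cmod (w - z))^2)"
    using ww zz n2 by simp
  finally show ?thesis .
qed

lemma poisson_01:
  assumes "H holomorphic_on ball 0 R" "0 < \<rho>" "\<rho> < R" "norm z < \<rho>"
  shows "((\<lambda>t. H (of_real \<rho> * cis (2*pi*t)) * of_real (poisk \<rho> z t)) has_integral H z) {0..1}"
proof -
  from has_integral_add[OF cauchy_01[OF assms] cauchy_zero_01[OF assms]]
  have "((\<lambda>t. H (of_real \<rho> * cis (2*pi*t)) * (of_real \<rho> * cis (2*pi*t)) / (of_real \<rho> * cis (2*pi*t) - z)
     + H (of_real \<rho> * cis (2*pi*t)) * (cnj z * (of_real \<rho> * cis (2*pi*t))) / (of_real (\<rho>^2) - cnj z * (of_real \<rho> * cis (2*pi*t))))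
     has_integral H z) {0..1}" by simp
  moreover have "H (of_real \<rho> * cis (2*pi*t)) * (of_real \<rho> * cis (2*pi*t)) / (of_real \<rho> * cis (2*pi*t) - z)
     + H (of_real \<rho> * cis (2*pi*t)) * (cnj z * (of_real \<rho> * cis (2*pi*t))) / (of_real (\<rho>^2) - cnj z * (of_real \<rho> * cis (2*pi*t)))
     = H (of_real \<rho> * cis (2*pi*t)) * of_real (poisk \<rho> z t)" for t
  proof -
    have "cmod (of_real \<rho> * cis (2*pi*t)) = \<rho>" using assms by (simp add: norm_mult)
    from poisk_identity[OF this assms(4)] show ?thesis
      unfolding poisk_def by (simp add: distrib_left[symmetric] times_divide_eq_right[symmetric] del: times_divide_eq_right)
  qed
  ultimately show ?thesis by simp
qed

lemma poisk_pos: "cmod z < \<rho> \<Longrightarrow> poisk \<rho> z t > 0"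
proof -
  assume a: "cmod z < \<rho>"
  have "cmod (of_real \<rho> * cis (2*pi*t) - z) \<noteq> 0"
  proof
    assume "cmod (of_real \<rho> * cis (2*pi*t) - z) = 0"
    hence "z = of_real \<rho> * cis (2*pi*t)" by simp
    hence "cmod z = \<bar>\<rho>\<bar>" by (simp add: norm_mult)
    thus False using a by simp
  qed
  moreover have "(cmod z)^2 < \<rho>^2" using a by (intro power_strict_mono) auto
  ultimately show ?thesis unfolding poisk_def by (intro divide_pos_pos) auto
qed

lemma poisk_int1: assumes "0 < \<rho>" "cmod z < \<rho>" shows "((\<lambda>t. poisk \<rho> z t) has_integral 1) {0..1}"
proof -
  have "((\<lambda>t. (\<lambda>_. 1::complex) (of_real \<rho> * cis (2*pi*t)) * of_real (poisk \<rho> z t)) has_integral 1) {0..1}"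
    by (rule poisson_01[of _ "\<rho>+1"]) (use assms in auto)
  hence "((\<lambda>t. complex_of_real (poisk \<rho> z t)) has_integral of_real 1) {0..1}" by simp
  from has_integral_linear[OF this bounded_linear_Re] show ?thesis by (simp add: o_def)
qed

lemma norm_diff_cis_sq: "(cmod (of_real \<rho> * cis a - of_real r * cis b))^2 = \<rho>^2 + r^2 - 2*\<rho>*r*(cos a * cos b + sin a * sin b)"
proof -
  have "(cmod (of_real \<rho> * cis a - of_real r * cis b))^2 = (\<rho> * cos a - r * cos b)^2 + (\<rho> * sin a - r * sin b)^2"
    by (simp add: cmod_power2)
  also have "\<dots> = \<rho>^2 + r^2 - 2*\<rho>*r*(cos a * cos b + sin a * sin b)"
    using sin_cos_squared_add[of a] sin_cos_squared_add[of b] by algebra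
  finally show ?thesis .
qed

lemma poisk_sym:
  assumes "0 \<le> r"
  shows "poisk \<rho> (of_real r * cis (2*pi*t)) s = poisk \<rho> (of_real r * cis (2*pi * s)) t"
proof -
  have "(cmod (of_real \<rho> * cis (2*pi * s) - of_real r * cis (2*pi*t)))^2 = (cmod (of_real \<rho> * cis (2*pi*t) - of_real r * cis (2*pi * s)))^2"
    unfolding norm_diff_cis_sq by (simp add: algebra_simps)
  thus ?thesis using assms unfolding poisk_def by (simp add: norm_mult)
qed

lemma cont_poisk2:
  assumes "0 \<le> r" "r < \<rho>"
  shows "continuous_on UNIV (\<lambda>(t,s). poisk \<rho> (of_real r * cis (2*pi*t)) s)"
proof -
  have nz: "cmod (of_real \<rho> * cis (2*pi * s) - of_real r * cis (2*pi*t)) \<noteq> 0" for s t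
  proof
    assume "cmod (of_real \<rho> * cis (2*pi * s) - of_real r * cis (2*pi*t)) = 0"
    hence "of_real \<rho> * cis (2*pi * s) = of_real r * cis (2*pi*t)" by simp
    hence "cmod (of_real \<rho> * cis (2*pi * s)) = cmod (of_real r * cis (2*pi*t))" by simp
    thus False using assms by (simp add: norm_mult)
  qed
  show ?thesis unfolding poisk_def case_prod_unfold
    using nz by (intro continuous_intros) auto
qed

lemma M1_mono:
  assumes H: "H holomorphic_on ball 0 R" and r: "0 \<le> r" "r < \<rho>" "\<rho> < R"
  shows "integral {0..1} (\<lambda>t. cmod (H (of_real r * cis (2*pi*t)))) \<le> integral {0..1} (\<lambda>t. cmod (H (of_real \<rho> * cis (2*pi*t))))"
proof -
  have \<rho>0: "0 < \<rho>" using r by simp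
  have contH: "continuous_on UNIV (\<lambda>s. H (of_real \<rho> * cis (2*pi * s)))"
  proof (rule continuous_on_compose2[of "ball 0 R" H])
    show "continuous_on (ball 0 R) H" using H holomorphic_on_imp_continuous_on by blast
    show "continuous_on UNIV (\<lambda>s. complex_of_real \<rho> * cis (2 * pi * s))" by (intro continuous_intros)
    show "(\<lambda>s. complex_of_real \<rho> * cis (2 * pi * s)) ` UNIV \<subseteq> ball 0 R" using r by (auto simp: norm_mult)
  qed
  have contHr: "continuous_on UNIV (\<lambda>s. H (of_real r * cis (2*pi * s)))"
  proof (rule continuous_on_compose2[of "ball 0 R" H])
    show "continuous_on (ball 0 R) H" using H holomorphic_on_imp_continuous_on by blast
    show "continuous_on UNIV (\<lambda>s. complex_of_real r * cis (2 * pi * s))" by (intro continuous_intros)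
    show "(\<lambda>s. complex_of_real r * cis (2 * pi * s)) ` UNIV \<subseteq> ball 0 R" using r by (auto simp: norm_mult)
  qed
  define F where "F = (\<lambda>t s. cmod (H (of_real \<rho> * cis (2*pi * s))) * poisk \<rho> (of_real r * cis (2*pi*t)) s)"
  have contF: "continuous_on UNIV (\<lambda>(t,s). F t s)"
  proof -
    have "continuous_on UNIV (\<lambda>x. H (of_real \<rho> * cis (2*pi * snd x)))"
      by (rule continuous_on_compose2[OF contH, where f=snd]) (auto intro: continuous_intros)
    hence c1: "continuous_on UNIV (\<lambda>x. cmod (H (of_real \<rho> * cis (2*pi * snd x))))"
      by (intro continuous_intros)
    have c2: "continuous_on UNIV (\<lambda>x. poisk \<rho> (of_real r * cis (2*pi*fst x)) (snd x))"
      using cont_poisk2[OF r(1,2)] by (simp add: case_prod_unfold)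
    show ?thesis using continuous_on_mult[OF c1 c2] unfolding F_def case_prod_unfold by simp
  qed
  have pt: "cmod (H (of_real r * cis (2*pi*t))) \<le> integral {0..1} (F t)" for t
  proof -
    have zr: "cmod (of_real r * cis (2*pi*t)) < \<rho>" using r by (simp add: norm_mult)
    have I: "((\<lambda>s. H (of_real \<rho> * cis (2*pi * s)) * of_real (poisk \<rho> (of_real r * cis (2*pi*t)) s)) has_integral H (of_real r * cis (2*pi*t))) {0..1}"
      by (rule poisson_01[OF H \<rho>0 r(3) zr])
    have "cmod (integral {0..1} (\<lambda>s. H (of_real \<rho> * cis (2*pi * s)) * of_real (poisk \<rho> (of_real r * cis (2*pi*t)) s))) \<le> integral {0..1} (F t)"
    proof (rule integral_norm_bound_integral)
      show "(\<lambda>s. H (of_real \<rho> * cis (2*pi * s)) * of_real (poisk \<rho> (of_real r * cis (2*pi*t)) s)) integrable_on {0..1}"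
        using I by blast
      have "continuous_on UNIV (\<lambda>s. (\<lambda>(t,s). F t s) (t, s))"
        by (rule continuous_on_compose2[OF contF]) (simp_all add: continuous_on_Pair continuous_on_const continuous_on_id)
      hence "continuous_on UNIV (F t)" by simp
      thus "F t integrable_on {0..1}" by (rule integrable_continuous_interval[OF continuous_on_subset]) auto
      show "\<And>x. x\<in>{0..1} \<Longrightarrow> cmod (H (of_real \<rho> * cis (2*pi*x)) * of_real (poisk \<rho> (of_real r * cis (2*pi*t)) x)) \<le> F t x"
        using poisk_pos[OF zr] by (auto simp: F_def norm_mult less_imp_le)
    qed
    thus ?thesis using integral_unique[OF I] by simp
  qed
  have "integral {0..1} (\<lambda>t. cmod (H (of_real r * cis (2*pi*t)))) \<le> integral {0..1} (\<lambda>t. integral {0..1} (F t))"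
  proof (rule integral_le)
    show "(\<lambda>t. cmod (H (of_real r * cis (2*pi*t)))) integrable_on {0..1}"
      by (rule integrable_continuous_interval[OF continuous_on_subset[OF continuous_on_norm[OF contHr]]]) auto
    have "continuous_on (UNIV \<times> cbox 0 1) (\<lambda>(t,s). F t s)" using contF continuous_on_subset by blast
    hence "continuous_on UNIV (\<lambda>t. integral (cbox 0 1) (F t))"
      by (rule integral_continuous_on_param)
    hence "continuous_on UNIV (\<lambda>t. integral {0..1} (F t))" by (simp add: cbox_interval)
    thus "(\<lambda>t. integral {0..1} (F t)) integrable_on {0..1}"
      by (rule integrable_continuous_interval[OF continuous_on_subset]) auto
  qed (use pt in simp)
  also have "\<dots> = integral {0..1} (\<lambda>s. integral {0..1} (\<lambda>t. F t s))"
  proof -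
    have "continuous_on (cbox (0,0) (1,1)) (\<lambda>(t,s). F t s)" using contF continuous_on_subset by blast
    from integral_swap_continuous[OF this] show ?thesis by simp
  qed
  also have "\<dots> = integral {0..1} (\<lambda>s. cmod (H (of_real \<rho> * cis (2*pi * s))))"
  proof (rule integral_cong)
    fix s :: real
    have zr: "cmod (of_real r * cis (2*pi * s)) < \<rho>" using r by (simp add: norm_mult)
    have "integral {0..1} (\<lambda>t. F t s) = cmod (H (of_real \<rho> * cis (2*pi * s))) * integral {0..1} (\<lambda>t. poisk \<rho> (of_real r * cis (2*pi*t)) s)"
      unfolding F_def by simp
    also have "integral {0..1} (\<lambda>t. poisk \<rho> (of_real r * cis (2*pi*t)) s) = integral {0..1} (\<lambda>t. poisk \<rho> (of_real r * cis (2*pi * s)) t)"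
      using poisk_sym[OF r(1)] by simp
    also have "\<dots> = 1" using poisk_int1[OF \<rho>0 zr] by (rule integral_unique)
    finally show "integral {0..1} (\<lambda>t. F t s) = cmod (H (of_real \<rho> * cis (2*pi * s)))" by simp
  qed
  finally show ?thesis .
qed


lemma cont_powr_norm:
  assumes "continuous_on S F" "0 < p"
  shows "continuous_on S (\<lambda>z. cmod (F z) powr p)"
  using assms by (intro continuous_on_powr' continuous_intros) auto

lemma circ_cont:
  assumes "continuous_on (cball 0 R) F" "0 \<le> r" "r \<le> R"
  shows "continuous_on UNIV (\<lambda>t. F (of_real r * cis (2*pi*t)))"
  by (rule continuous_on_compose2[OF assms(1)]) (use assms in \<open>auto intro!: continuous_intros simp: norm_mult\<close>)

lemma circ_int:
  assumes "continuous_on (cball 0 R) F" "0 \<le> r" "r \<le> R" "0 < p"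
  shows "(\<lambda>t. cmod (F (of_real r * cis (2*pi*t))) powr p) integrable_on {0..1}"
  by (rule integrable_continuous_interval[OF continuous_on_subset[OF cont_powr_norm[OF circ_cont[OF assms(1-3)] assms(4)]]]) auto

lemma Mp_mono_nz:
  assumes H: "H holomorphic_on ball 0 R" and nz: "\<And>z. z \<in> ball 0 R \<Longrightarrow> H z \<noteq> 0"
    and r: "0 \<le> r" "r < \<rho>" "\<rho> < R" and p: "0 < p"
  shows "integral {0..1} (\<lambda>t. cmod (H (of_real r * cis (2*pi*t))) powr p)
       \<le> integral {0..1} (\<lambda>t. cmod (H (of_real \<rho> * cis (2*pi*t))) powr p)"
proof -
  obtain g where g: "g holomorphic_on ball 0 R" "\<And>z. z \<in> ball 0 R \<Longrightarrow> H z = exp (g z)"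
    using contractible_imp_holomorphic_log[OF H convex_imp_contractible[OF convex_ball] nz] by metis
  define G where "G = (\<lambda>z. exp (of_real p * g z))"
  have G: "G holomorphic_on ball 0 R" unfolding G_def by (intro holomorphic_intros g)
  have eq: "cmod (H z) powr p = cmod (G z)" if "z \<in> ball 0 R" for z
    using g(2)[OF that] by (simp add: G_def powr_def)
  have inb: "of_real x * cis (2*pi*t) \<in> ball 0 R" if "0 \<le> x" "x < R" for x t
    using that by (simp add: norm_mult)
  have "integral {0..1} (\<lambda>t. cmod (H (of_real r * cis (2*pi*t))) powr p) = integral {0..1} (\<lambda>t. cmod (G (of_real r * cis (2*pi*t))))"
    using eq inb r by simp
  also have "\<dots> \<le> integral {0..1} (\<lambda>t. cmod (G (of_real \<rho> * cis (2*pi*t))))"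
    by (rule M1_mono[OF G r])
  also have "\<dots> = integral {0..1} (\<lambda>t. cmod (H (of_real \<rho> * cis (2*pi*t))) powr p)"
    using eq inb r by simp
  finally show ?thesis .
qed

lemma blaschke_le:
  fixes a z :: complex
  shows "(cmod (of_real \<rho> * (z - a)))^2 + (\<rho>^2 - (cmod z)^2) * (\<rho>^2 - (cmod a)^2) = (cmod (of_real (\<rho>^2) - cnj a * z))^2"
  unfolding cmod_power2 by (simp add: power2_eq_square) algebra

lemma Mp_mono_fin_aux:
  assumes "0 < p"
  shows "\<forall>f R. card {z\<in>ball 0 R. f z = 0} = n \<longrightarrow> finite {z\<in>ball 0 R. f z = 0} \<longrightarrow> f holomorphic_on ball 0 R
     \<longrightarrow> {z\<in>ball 0 R. f z = 0} \<subseteq> ball 0 \<rho> \<longrightarrow> 0 \<le> r \<longrightarrow> r < \<rho> \<longrightarrow> \<rho> < R \<longrightarrow>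
     integral {0..1} (\<lambda>t. cmod (f (of_real r * cis (2*pi*t))) powr p)
       \<le> integral {0..1} (\<lambda>t. cmod (f (of_real \<rho> * cis (2*pi*t))) powr p)"
proof (induction n)
  case 0
  show ?case
  proof (intro allI impI)
    fix f :: "complex \<Rightarrow> complex" and R :: real assume a: "card {z\<in>ball 0 R. f z = 0} = 0" "finite {z\<in>ball 0 R. f z = 0}" "f holomorphic_on ball 0 R"
      "0 \<le> r" "r < \<rho>" "\<rho> < R"
    have "\<And>z. z \<in> ball 0 R \<Longrightarrow> f z \<noteq> 0" using a(1,2) by auto
    from Mp_mono_nz[OF a(3) this a(4-6) assms] show "integral {0..1} (\<lambda>t. cmod (f (of_real r * cis (2*pi*t))) powr p)
       \<le> integral {0..1} (\<lambda>t. cmod (f (of_real \<rho> * cis (2*pi*t))) powr p)" .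
  qed
next
  case (Suc n)
  show ?case
  proof (intro allI impI)
    fix f :: "complex \<Rightarrow> complex" and R :: real
    define Z where "Z = {z\<in>ball 0 R. f z = 0}"
    assume a: "card {z\<in>ball 0 R. f z = 0} = Suc n" "finite {z\<in>ball 0 R. f z = 0}" "f holomorphic_on ball 0 R"
      "{z\<in>ball 0 R. f z = 0} \<subseteq> ball 0 \<rho>" "0 \<le> r" "r < \<rho>" "\<rho> < R"
    hence cZ: "card Z = Suc n" and fZ: "finite Z" and Zs: "Z \<subseteq> ball 0 \<rho>" and holf: "f holomorphic_on ball 0 R"
      unfolding Z_def by auto
    have \<rho>0: "0 < \<rho>" using a by simp
    obtain a0 where a0: "a0 \<in> Z" using cZ by (metis card.empty ex_in_conv nat.distinct(1))
    have a0R: "a0 \<in> ball 0 R" and fa0: "f a0 = 0" using a0 by (auto simp: Z_def)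
    have a0\<rho>: "cmod a0 < \<rho>" using a0 Zs by auto
    have nonconst: "\<not> f constant_on ball 0 R"
    proof
      assume "f constant_on ball 0 R"
      then obtain c where "\<And>z. z \<in> ball 0 R \<Longrightarrow> f z = c" by (auto simp: constant_on_def)
      with fa0 a0R have "\<And>z. z \<in> ball 0 R \<Longrightarrow> f z = 0" by metis
      hence "Z = ball 0 R" by (auto simp: Z_def)
      with fZ have "finite (ball (0::complex) R)" by simp
      moreover have "ball (0::complex) R \<noteq> {}" using a by auto
      ultimately show False using finite_imp_not_open open_ball by blast
    qed
    obtain g r' m where gm: "0 < m" "0 < r'" "ball a0 r' \<subseteq> ball 0 R" "g holomorphic_on ball a0 r'"
      "\<And>w. w \<in> ball a0 r' \<Longrightarrow> f w = (w - a0)^m * g w" "\<And>w. w \<in> ball a0 r' \<Longrightarrow> g w \<noteq> 0"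
      using holomorphic_factor_zero_nonconstant[OF holf open_ball connected_ball a0R fa0 nonconst] by metis
    define R' where "R' = (if a0 = 0 then R else min R (\<rho>^2 / cmod a0))"
    have \<rho>R': "\<rho> < R'"
    proof (cases "a0 = 0")
      case False
      hence "\<rho> * cmod a0 < \<rho>^2" using a0\<rho> \<rho>0 by (simp add: power2_eq_square)
      hence "\<rho> < \<rho>^2 / cmod a0" using False by (simp add: field_simps)
      thus ?thesis using False a by (simp add: R'_def)
    qed (use a in \<open>simp add: R'_def\<close>)
    have R'R: "R' \<le> R" by (simp add: R'_def)
    define c where "c = (\<lambda>z. of_real (\<rho>^2) - cnj a0 * z)"
    have cnz: "c z \<noteq> 0" if "z \<in> ball 0 R'" for z
    proof (cases "a0 = 0")
      case True thus ?thesis using \<rho>0 by (simp add: c_def)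
    next
      case False
      have "cmod z < \<rho>^2 / cmod a0" using that False by (simp add: R'_def)
      hence "cmod a0 * cmod z < \<rho>^2" using False by (simp add: field_simps)
      hence "cmod (cnj a0 * z) \<noteq> cmod (of_real (\<rho>^2) :: complex)" by (simp add: norm_mult norm_power)
      thus ?thesis unfolding c_def by (metis eq_iff_diff_eq_0)
    qed
    define h where "h = (\<lambda>z. if z \<in> ball a0 r' then g z else f z / (z - a0)^m)"
    have hol_h: "h holomorphic_on ball 0 R"
    proof -
      have e1: "ball 0 R = ball a0 r' \<union> (ball 0 R - {a0})" using gm(2,3) by auto
      have "h holomorphic_on ball a0 r'" by (rule holomorphic_transform[OF gm(4)]) (simp add: h_def)
      moreover have "h holomorphic_on (ball 0 R - {a0})"
      proof (rule holomorphic_transform[of "\<lambda>z. f z / (z - a0)^m"])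
        show "(\<lambda>z. f z / (z - a0) ^ m) holomorphic_on ball 0 R - {a0}"
          by (intro holomorphic_intros holomorphic_on_subset[OF holf]) auto
        fix x assume x: "x \<in> ball 0 R - {a0}"
        show "f x / (x - a0) ^ m = h x"
        proof (cases "x \<in> ball a0 r'")
          case True thus ?thesis using gm(5)[OF True] x by (simp add: h_def)
        qed (simp add: h_def)
      qed
      ultimately show ?thesis by (subst e1) (intro holomorphic_on_Un open_ball open_delete)
    qed
    define G where "G = (\<lambda>z. h z * (c z / of_real \<rho>)^m)"
    have hol_G: "G holomorphic_on ball 0 R'"
      unfolding G_def c_def by (intro holomorphic_intros holomorphic_on_subset[OF hol_h]) (use R'R in auto)
    define B where "B = (\<lambda>z. of_real \<rho> * (z - a0) / c z)"
    have fBG: "f z = B z ^ m * G z" if "z \<in> ball 0 R'" for z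
    proof -
      have Bc: "B z * (c z / of_real \<rho>) = z - a0" using cnz[OF that] \<rho>0 by (simp add: B_def)
      have e: "B z ^ m * G z = (B z * (c z / of_real \<rho>))^m * h z"
        unfolding G_def power_mult_distrib by (simp add: mult_ac)
      show ?thesis
      proof (cases "z \<in> ball a0 r'")
        case True
        thus ?thesis using gm(5)[OF True] unfolding e Bc by (simp add: h_def)
      next
        case False
        hence za: "z \<noteq> a0" using gm(2) by auto
        thus ?thesis using False unfolding e Bc by (simp add: h_def)
      qed
    qed
    have Bn: "cmod (B z) \<le> 1" and Be: "cmod z = \<rho> \<Longrightarrow> cmod (B z) = 1" if "z \<in> ball 0 R'" "cmod z \<le> \<rho>" for z
    proof -
      have id: "(cmod (of_real \<rho> * (z - a0)))^2 + (\<rho>^2 - (cmod z)^2) * (\<rho>^2 - (cmod a0)^2) = (cmod (c z))^2"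
        unfolding c_def by (rule blaschke_le)
      have "(cmod a0)^2 < \<rho>^2" using a0\<rho> by (intro power_strict_mono) auto
      moreover have "(cmod z)^2 \<le> \<rho>^2" using that by (intro power_mono) auto
      ultimately have "(cmod (of_real \<rho> * (z - a0)))^2 \<le> (cmod (c z))^2" using id by (smt (verit) mult_nonneg_nonneg)
      hence "cmod (of_real \<rho> * (z - a0)) \<le> cmod (c z)" by (rule power2_le_imp_le) simp
      thus "cmod (B z) \<le> 1" using cnz[OF that(1)] by (simp add: B_def norm_divide divide_le_eq_1)
      assume "cmod z = \<rho>"
      hence "(cmod (of_real \<rho> * (z - a0)))^2 = (cmod (c z))^2" using id by simp
      hence "cmod (of_real \<rho> * (z - a0)) = cmod (c z)" by (simp add: power2_eq_iff_nonneg)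
      thus "cmod (B z) = 1" using cnz[OF that(1)] by (simp add: B_def norm_divide)
    qed
    have zerosG: "{z\<in>ball 0 R'. G z = 0} = Z - {a0}"
    proof -
      have "G z = 0 \<longleftrightarrow> h z = 0" if "z \<in> ball 0 R'" for z
        using cnz[OF that] \<rho>0 by (simp add: G_def)
      moreover have "h z = 0 \<longleftrightarrow> z \<in> Z - {a0}" if "z \<in> ball 0 R'" for z
      proof (cases "z \<in> ball a0 r'")
        case True
        have "f z \<noteq> 0" if "z \<noteq> a0" using gm(5)[OF True] gm(6)[OF True] that by simp
        thus ?thesis using True gm(6)[OF True] by (auto simp: h_def Z_def)
      next
        case False
        hence za: "z \<noteq> a0" using gm(2) by auto
        thus ?thesis using False that R'R by (auto simp: h_def Z_def)
      qed
      moreover have "Z \<subseteq> ball 0 R'" using Zs \<rho>R' by auto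
      ultimately show ?thesis by auto
    qed
    have IH: "integral {0..1} (\<lambda>t. cmod (G (of_real r * cis (2*pi*t))) powr p)
       \<le> integral {0..1} (\<lambda>t. cmod (G (of_real \<rho> * cis (2*pi*t))) powr p)"
    proof (rule Suc.IH[rule_format, OF _ _ hol_G _ a(5,6) \<rho>R'])
      show "card {z\<in>ball 0 R'. G z = 0} = n" using zerosG cZ fZ a0 by simp
      show "finite {z\<in>ball 0 R'. G z = 0}" using zerosG fZ by simp
      show "{z\<in>ball 0 R'. G z = 0} \<subseteq> ball 0 \<rho>" using zerosG Zs by auto
    qed
    have inb: "of_real x * cis (2*pi*t) \<in> ball 0 R'" "cmod (of_real x * cis (2*pi*t)) \<le> \<rho>" if "0 \<le> x" "x \<le> \<rho>" for x t
      using that \<rho>R' by (auto simp: norm_mult)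
    have cf: "continuous_on (cball 0 \<rho>) f"
      by (rule holomorphic_on_imp_continuous_on[OF holomorphic_on_subset[OF holf]]) (use a in auto)
    have cG: "continuous_on (cball 0 \<rho>) G"
      by (rule holomorphic_on_imp_continuous_on[OF holomorphic_on_subset[OF hol_G]]) (use \<rho>R' in auto)
    have "integral {0..1} (\<lambda>t. cmod (f (of_real r * cis (2*pi*t))) powr p)
       \<le> integral {0..1} (\<lambda>t. cmod (G (of_real r * cis (2*pi*t))) powr p)"
    proof (rule integral_le)
      show "(\<lambda>t. cmod (f (of_real r * cis (2*pi*t))) powr p) integrable_on {0..1}"
        by (rule circ_int[OF cf]) (use a assms in auto)
      show "(\<lambda>t. cmod (G (of_real r * cis (2*pi*t))) powr p) integrable_on {0..1}"
        by (rule circ_int[OF cG]) (use a assms in auto)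
      fix t :: real
      let ?z = "of_real r * cis (2*pi*t)"
      have zz: "?z \<in> ball 0 R'" "cmod ?z \<le> \<rho>" using inb[of r t] a by auto
      have "cmod (f ?z) = cmod (B ?z) ^ m * cmod (G ?z)" using fBG[OF zz(1)] by (simp add: norm_mult norm_power)
      also have "\<dots> \<le> cmod (G ?z)" using Bn[OF zz] by (simp add: mult_left_le_one_le power_le_one)
      finally show "cmod (f ?z) powr p \<le> cmod (G ?z) powr p" using assms by (intro powr_mono2) auto
    qed
    also note IH
    also have "integral {0..1} (\<lambda>t. cmod (G (of_real \<rho> * cis (2*pi*t))) powr p)
       = integral {0..1} (\<lambda>t. cmod (f (of_real \<rho> * cis (2*pi*t))) powr p)"
    proof (rule integral_cong)
      fix t :: real
      let ?z = "of_real \<rho> * cis (2*pi*t)"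
      have zz: "?z \<in> ball 0 R'" "cmod ?z \<le> \<rho>" using inb[of \<rho> t] \<rho>0 by auto
      have "cmod ?z = \<rho>" using \<rho>0 by (simp add: norm_mult)
      hence "cmod (f ?z) = cmod (G ?z)" using fBG[OF zz(1)] Be[OF zz] by (simp add: norm_mult norm_power)
      thus "cmod (G ?z) powr p = cmod (f ?z) powr p" by simp
    qed
    finally show "integral {0..1} (\<lambda>t. cmod (f (of_real r * cis (2*pi*t))) powr p)
       \<le> integral {0..1} (\<lambda>t. cmod (f (of_real \<rho> * cis (2*pi*t))) powr p)" .
  qed
qed


lemma Mp_mono_fin:
  assumes "finite {z\<in>ball 0 R. f z = 0}" "f holomorphic_on ball 0 R" "{z\<in>ball 0 R. f z = 0} \<subseteq> ball 0 \<rho>"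
    "0 \<le> r" "r < \<rho>" "\<rho> < R" "0 < p"
  shows "integral {0..1} (\<lambda>t. cmod (f (of_real r * cis (2*pi*t))) powr p)
       \<le> integral {0..1} (\<lambda>t. cmod (f (of_real \<rho> * cis (2*pi*t))) powr p)"
  using Mp_mono_fin_aux[OF assms(7), of "card {z\<in>ball 0 R. f z = 0}" \<rho> r] assms by blast

lemma good_radius:
  assumes holf: "f holomorphic_on ball 0 1" and nz: "\<exists>z\<in>ball 0 1. f z \<noteq> 0" and lo: "lo < 1"
  obtains \<rho> R where "lo < \<rho>" "\<rho> < R" "R < 1" "finite {z\<in>ball 0 R. f z = 0}" "{z\<in>ball 0 R. f z = 0} \<subseteq> ball 0 \<rho>"
proof -
  define R0 where "R0 = (max lo 0 + 1) / 2"
  have R0: "lo < R0" "R0 < 1" "0 < R0" using lo by (auto simp: R0_def)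
  define W where "W = {z\<in>cball 0 R0. f z = 0}"
  have fW: "finite W"
  proof (cases "f constant_on ball 0 1")
    case True
    then obtain c where c: "\<And>z. z \<in> ball 0 1 \<Longrightarrow> f z = c" by (auto simp: constant_on_def)
    with nz have "c \<noteq> 0" by auto
    hence "W = {}" using c R0 by (auto simp: W_def)
    thus ?thesis by simp
  next
    case False
    show ?thesis unfolding W_def
      by (rule holomorphic_compact_finite_zeros[OF holf open_ball connected_ball compact_cball _ False]) (use R0 in auto)
  qed
  define M where "M = cmod ` W"
  have fM: "finite M" using fW by (simp add: M_def)
  have "infinite ({lo<..<R0} - M)" using fM R0 by (intro Diff_infinite_finite) auto
  then obtain \<rho> where \<rho>: "\<rho> \<in> {lo<..<R0}" "\<rho> \<notin> M" by (metis Diff_iff finite.emptyI ex_in_conv)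
  define R where "R = Min (insert R0 {x\<in>M. x > \<rho>})"
  have fin: "finite (insert R0 {x\<in>M. x > \<rho>})" using fM by simp
  have "\<rho> < R" unfolding R_def using fin \<rho> by (subst Min_gr_iff) auto
  moreover have "R \<le> R0" unfolding R_def using fin by simp
  moreover have sub: "{z\<in>ball 0 R. f z = 0} \<subseteq> W" using \<open>R \<le> R0\<close> by (auto simp: W_def)
  moreover have "{z\<in>ball 0 R. f z = 0} \<subseteq> ball 0 \<rho>"
  proof
    fix z assume z: "z \<in> {z\<in>ball 0 R. f z = 0}"
    hence zW: "z \<in> W" using sub by auto
    hence zM: "cmod z \<in> M" by (simp add: M_def)
    have "cmod z < R" using z by simp
    moreover have "cmod z \<noteq> \<rho>" using zM \<rho>(2) by auto
    moreover have "\<not> cmod z > \<rho>"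
    proof
      assume "cmod z > \<rho>"
      hence "R \<le> cmod z" unfolding R_def using fin zM by (intro Min_le) auto
      with \<open>cmod z < R\<close> show False by simp
    qed
    ultimately show "z \<in> ball 0 \<rho>" by simp
  qed
  ultimately show ?thesis using that[of \<rho> R] \<rho> R0 fW finite_subset[OF sub] by auto
qed

lemma hardy_circle_le:
  assumes contf: "continuous_on (cball 0 1) f" and holf: "f holomorphic_on ball 0 1" and p: "0 < p"
    and r: "0 \<le> r" "r < 1"
  shows "integral {0..1} (\<lambda>t. cmod (f (of_real r * cis (2*pi*t))) powr p)
       \<le> integral {0..1} (\<lambda>t. cmod (f (cis (2*pi*t))) powr p)"
proof (cases "\<exists>z\<in>ball 0 1. f z \<noteq> 0")
  case False
  have "integral {0..1} (\<lambda>t. cmod (f (of_real r * cis (2*pi*t))) powr p) = 0"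
    using False r by (simp add: norm_mult)
  moreover have "0 \<le> integral {0..1} (\<lambda>t. cmod (f (cis (2*pi*t))) powr p)"
    by (rule integral_nonneg) (use circ_int[OF contf, of 1 p] p in auto)
  ultimately show ?thesis by simp
next
  case True
  define \<phi> where "\<phi> = (\<lambda>z. cmod (f z) powr p)"
  have c\<phi>: "continuous_on (cball 0 1) \<phi>" unfolding \<phi>_def by (rule cont_powr_norm[OF contf p])
  have uc: "uniformly_continuous_on (cball 0 1) \<phi>" by (rule compact_uniformly_continuous[OF c\<phi> compact_cball])
  have int1: "(\<lambda>t. \<phi> (cis (2*pi*t))) integrable_on {0..1}"
    using circ_int[OF contf, of 1 p] p by (simp add: \<phi>_def)
  show ?thesis
  proof (rule field_le_epsilon)
    fix e :: real assume e: "0 < e"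
    obtain d where d: "d > 0" "\<And>x x'. x \<in> cball 0 1 \<Longrightarrow> x' \<in> cball 0 1 \<Longrightarrow> dist x' x < d \<Longrightarrow> dist (\<phi> x') (\<phi> x) < e"
      using uc e unfolding uniformly_continuous_on_def by metis
    obtain \<rho> R where \<rho>R: "max r (1 - d) < \<rho>" "\<rho> < R" "R < 1" "finite {z\<in>ball 0 R. f z = 0}" "{z\<in>ball 0 R. f z = 0} \<subseteq> ball 0 \<rho>"
      using good_radius[OF holf True, of "max r (1 - d)"] r d by auto
    have "integral {0..1} (\<lambda>t. cmod (f (of_real r * cis (2*pi*t))) powr p)
       \<le> integral {0..1} (\<lambda>t. cmod (f (of_real \<rho> * cis (2*pi*t))) powr p)"
      by (rule Mp_mono_fin[OF \<rho>R(4) holomorphic_on_subset[OF holf] \<rho>R(5) r(1) _ \<rho>R(2) p]) (use \<rho>R in auto)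
    also have "\<dots> \<le> integral {0..1} (\<lambda>t. \<phi> (cis (2*pi*t)) + e)"
    proof (rule integral_le)
      show "(\<lambda>t. cmod (f (of_real \<rho> * cis (2*pi*t))) powr p) integrable_on {0..1}"
        by (rule circ_int[OF contf]) (use \<rho>R r p in auto)
      show "(\<lambda>t. \<phi> (cis (2*pi*t)) + e) integrable_on {0..1}" using int1 by (intro integrable_add) auto
      fix t :: real
      have "dist (of_real \<rho> * cis (2*pi*t)) (cis (2*pi*t)) = cmod ((of_real \<rho> - 1) * cis (2*pi*t))"
        by (simp add: dist_norm algebra_simps)
      also have "\<dots> = 1 - \<rho>"
      proof -
        have "complex_of_real \<rho> - 1 = complex_of_real (\<rho> - 1)" by simp
        hence "cmod (complex_of_real \<rho> - 1) = \<bar>\<rho> - 1\<bar>" by (metis norm_of_real)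
        thus ?thesis using \<rho>R by (simp add: norm_mult)
      qed
      finally have "dist (of_real \<rho> * cis (2*pi*t)) (cis (2*pi*t)) < d" using \<rho>R by simp
      moreover have "of_real \<rho> * cis (2*pi*t) \<in> cball 0 1" "cis (2*pi*t) \<in> cball 0 1" using \<rho>R r by (auto simp: norm_mult)
      ultimately have "dist (\<phi> (of_real \<rho> * cis (2*pi*t))) (\<phi> (cis (2*pi*t))) < e" using d(2) by blast
      thus "cmod (f (of_real \<rho> * cis (2*pi*t))) powr p \<le> \<phi> (cis (2*pi*t)) + e"
        by (simp add: \<phi>_def dist_real_def)
    qed
    also have "\<dots> = integral {0..1} (\<lambda>t. cmod (f (cis (2*pi*t))) powr p) + e"
      using integral_add[OF int1 integrable_const_ivl[of e 0 1]] by (simp add: \<phi>_def)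
    finally show "integral {0..1} (\<lambda>t. cmod (f (of_real r * cis (2*pi*t))) powr p)
       \<le> integral {0..1} (\<lambda>t. cmod (f (cis (2*pi*t))) powr p) + e" .
  qed
qed


lemma nn_circ:
  assumes "continuous_on (cball 0 R) F" "0 \<le> r" "r \<le> R" "0 < p"
  shows "(\<integral>\<^sup>+ t\<in>{0..1::real}. ennreal (cmod (F (of_real r * cis (2*pi*t))) powr p) \<partial>lborel)
     = ennreal (integral {0..1} (\<lambda>t. cmod (F (of_real r * cis (2*pi*t))) powr p))"
  by (rule nn_integral_has_integral_lebesgue') (auto intro!: integrable_integral circ_int[OF assms])

lemma hardy_pow_le:
  assumes contf: "continuous_on (cball 0 1) f" and holf: "f holomorphic_on ball 0 1" and p: "0 < p"
  shows "hardy_pow p f \<le> ennreal (integral {0..1} (\<lambda>t. cmod (f (cis (2*pi*t))) powr p))"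
  unfolding hardy_pow_def
proof (rule SUP_least)
  fix r :: real assume r: "r \<in> {0<..<1}"
  have "(\<integral>\<^sup>+ t\<in>{0..1::real}. ennreal (cmod (f (of_real r * cis (2*pi*t))) powr p) \<partial>lborel)
     = ennreal (integral {0..1} (\<lambda>t. cmod (f (of_real r * cis (2*pi*t))) powr p))"
    by (rule nn_circ[OF contf]) (use r p in auto)
  also have "\<dots> \<le> ennreal (integral {0..1} (\<lambda>t. cmod (f (cis (2*pi*t))) powr p))"
    by (rule ennreal_leI, rule hardy_circle_le[OF contf holf p]) (use r in auto)
  finally show "(\<integral>\<^sup>+ t\<in>{0..1::real}. ennreal (cmod (f (of_real r * cis (2*pi*t))) powr p) \<partial>lborel)
     \<le> ennreal (integral {0..1} (\<lambda>t. cmod (f (cis (2*pi*t))) powr p))" .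
qed

lemma cis2pi_eq:
  assumes "cis (2*pi*x) = cis (2*pi*y)"
  obtains n :: int where "x = y + of_int n"
proof -
  have "exp (\<i> * complex_of_real (2*pi*x)) = exp (\<i> * complex_of_real (2*pi*y))"
    using assms by (simp add: cis_conv_exp)
  then obtain n :: int where "\<i> * complex_of_real (2*pi*x) = \<i> * complex_of_real (2*pi*y) + (of_int (2 * n) * pi) * \<i>"
    by (auto simp: exp_eq)
  hence "\<i> * complex_of_real (2*pi*x) = \<i> * complex_of_real (2*pi*y + 2 * pi * of_int n)"
    by (simp add: algebra_simps)
  hence "complex_of_real (2*pi*x) = complex_of_real (2*pi*y + 2 * pi * of_int n)"
    by (metis complex_i_not_zero mult_cancel_left)
  hence "2*pi*x = 2*pi*y + 2*pi * of_int n" using of_real_eq_iff by blast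
  hence "2*pi*x = 2*pi*(y + of_int n)" by (simp add: algebra_simps)
  hence "x = y + of_int n" using pi_gt_zero by (metis mult_cancel_left zero_neq_numeral mult_eq_0_iff pi_neq_zero)
  thus ?thesis by (rule that)
qed

lemma cis2pi_inj:
  assumes "cis (2*pi*x) = cis (2*pi*y)" "\<bar>x - y\<bar> < 1"
  shows "x = y"
proof -
  obtain n :: int where n: "x = y + of_int n" using cis2pi_eq[OF assms(1)] by blast
  hence "\<bar>of_int n :: real\<bar> < 1" using assms(2) by simp
  hence "n = 0" by linarith
  thus ?thesis using n by simp
qed

lemma cis2pi_meas: "(\<lambda>t::real. cis (2*pi*t)) \<in> borel_measurable borel"
  by (intro borel_measurable_continuous_onI continuous_intros)

lemma cm_emeasure:
  assumes "A \<in> sets borel"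
  shows "emeasure circle_measure A = emeasure lborel {t\<in>{0..1}. cis (2*pi*t) \<in> A}"
proof -
  have m: "(\<lambda>t::real. cis (2*pi*t)) \<in> measurable (restrict_space lborel {0..1}) borel"
    by (rule measurable_restrict_space1) (simp add: cis2pi_meas measurable_lborel1)
  have "emeasure circle_measure A = emeasure (restrict_space lborel {0..1}) ((\<lambda>t. cis (2*pi*t)) -` A \<inter> {0..1})"
    unfolding circle_measure_def by (subst emeasure_distr[OF m assms]) (simp add: space_restrict_space)
  also have "\<dots> = emeasure lborel ((\<lambda>t. cis (2*pi*t)) -` A \<inter> {0..1})"
    by (rule emeasure_restrict_space) auto
  also have "(\<lambda>t. cis (2*pi*t)) -` A \<inter> {0..1} = {t\<in>{0..1}. cis (2*pi*t) \<in> A}" by auto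
  finally show ?thesis .
qed

lemma sets_circle_measure[simp]: "sets circle_measure = sets borel"
  by (simp add: circle_measure_def)


definition arcI :: "nat \<Rightarrow> nat \<Rightarrow> complex set" where
  "arcI n k = (\<lambda>t. cis (2*pi*t)) ` {real k / real n ..< real (k+1) / real n}"

lemma cis_pre_sets: "A \<in> sets borel \<Longrightarrow> {t\<in>{0..1::real}. cis (2*pi*t) \<in> A} \<in> sets borel"
proof -
  assume A: "A \<in> sets borel"
  have "{t\<in>{0..1::real}. cis (2*pi*t) \<in> A} = {0..1} \<inter> ((\<lambda>t. cis (2*pi*t)) -` A \<inter> space borel)" by auto
  also have "\<dots> \<in> sets borel" using measurable_sets[OF cis2pi_meas A] by auto
  finally show ?thesis .
qed

lemma arc_basic:
  assumes n: "2 \<le> n" and k: "k < n"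
  shows "is_arc (arcI n k)" "arcI n k \<in> sets borel" "arcI n k \<subseteq> cball 0 1"
    "emeasure circle_measure (arcI n k) \<ge> ennreal (1 / real n)"
proof -
  let ?a = "real k / real n" and ?b = "real (k+1) / real n"
  have npos: "real n > 0" using n by simp
  have ab: "?a < ?b" using npos by (simp add: divide_strict_right_mono)
  have ba: "?b - ?a = 1 / real n" using npos by (simp add: field_simps)
  have ba1: "?b - ?a < 1" using ba n by (simp add: field_simps)
  show "is_arc (arcI n k)" unfolding is_arc_def arcI_def
    by (rule exI[of _ ?a], rule exI[of _ ?b]) (use ab ba1 in auto)
  have eq: "arcI n k = (\<lambda>t. cis (2*pi*t)) ` {?a..?b} - {cis (2*pi*?b)}"
  proof
    show "arcI n k \<subseteq> (\<lambda>t. cis (2*pi*t)) ` {?a..?b} - {cis (2*pi*?b)}"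
    proof
      fix z assume "z \<in> arcI n k"
      then obtain t where t: "t \<in> {?a..<?b}" "z = cis (2*pi*t)" by (auto simp: arcI_def)
      have "cis (2*pi*t) \<noteq> cis (2*pi*?b)"
      proof
        assume "cis (2*pi*t) = cis (2*pi*?b)"
        from cis2pi_inj[OF this] t ba1 show False by auto
      qed
      thus "z \<in> (\<lambda>t. cis (2*pi*t)) ` {?a..?b} - {cis (2*pi*?b)}" using t by auto
    qed
  next
    show "(\<lambda>t. cis (2*pi*t)) ` {?a..?b} - {cis (2*pi*?b)} \<subseteq> arcI n k"
      unfolding arcI_def by (force simp: less_eq_real_def)
  qed
  have "closed ((\<lambda>t. cis (2*pi*t)) ` {?a..?b})"
    by (intro compact_imp_closed compact_continuous_image continuous_intros compact_Icc)
  thus "arcI n k \<in> sets borel" unfolding eq by (intro sets.Diff borel_closed) auto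
  show "arcI n k \<subseteq> cball 0 1" by (auto simp: arcI_def)
  have "{?a..<?b} \<subseteq> {t\<in>{0..1}. cis (2*pi*t) \<in> arcI n k}"
  proof -
    have b1: "?b \<le> 1" using k npos by (simp add: field_simps)
    have a0: "0 \<le> ?a" by simp
    have "{?a..<?b} \<subseteq> {0..1}"
    proof
      fix x assume x: "x \<in> {?a..<?b}"
      hence "?a \<le> x" "x < ?b" by auto
      hence "0 \<le> x" "x \<le> 1" using a0 b1 by linarith+
      thus "x \<in> {0..1}" by simp
    qed
    thus ?thesis unfolding arcI_def by auto
  qed
  hence "emeasure lborel {?a..<?b} \<le> emeasure lborel {t\<in>{0..1}. cis (2*pi*t) \<in> arcI n k}"
    by (intro emeasure_mono) (use cis_pre_sets[OF \<open>arcI n k \<in> sets borel\<close>] in auto)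
  moreover have "emeasure lborel {?a..<?b} = ennreal (1 / real n)" using ab ba by simp
  ultimately show "emeasure circle_measure (arcI n k) \<ge> ennreal (1 / real n)"
    using cm_emeasure[OF \<open>arcI n k \<in> sets borel\<close>] by simp
qed

lemma arc_disj:
  assumes "j < n" "k < n" "j \<noteq> k" "z \<in> arcI n j"
  shows "z \<notin> arcI n k"
proof
  assume "z \<in> arcI n k"
  then obtain t where t: "t \<in> {real k / real n ..< real (k+1) / real n}" "z = cis (2*pi*t)" by (auto simp: arcI_def)
  obtain s where s: "s \<in> {real j / real n ..< real (j+1) / real n}" "z = cis (2*pi * s)" using assms(4) by (auto simp: arcI_def)
  have npos: "real n > 0" using assms by simp
  have t01: "0 \<le> t" "t < 1"
  proof -
    have "real k \<le> t * real n" "t * real n < real k + 1" using t npos by (auto simp: field_simps)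
    moreover have "real k + 1 \<le> real n" using assms(2) by simp
    ultimately have h1: "0 \<le> t * real n" and h2: "t * real n < real n" by linarith+
    show "0 \<le> t" using h1 npos by (simp add: zero_le_mult_iff)
    show "t < 1"
    proof (rule ccontr)
      assume "\<not> t < 1"
      hence "1 * real n \<le> t * real n" using npos by (intro mult_right_mono) auto
      thus False using h2 by simp
    qed
  qed
  have s01: "0 \<le> s" "s < 1"
  proof -
    have "real j \<le> s * real n" "s * real n < real j + 1" using s npos by (auto simp: field_simps)
    moreover have "real j + 1 \<le> real n" using assms(1) by simp
    ultimately have h1: "0 \<le> s * real n" and h2: "s * real n < real n" by linarith+
    show "0 \<le> s" using h1 npos by (simp add: zero_le_mult_iff)
    show "s < 1"
    proof (rule ccontr)
      assume "\<not> s < 1"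
      hence "1 * real n \<le> s * real n" using npos by (intro mult_right_mono) auto
      thus False using h2 by simp
    qed
  qed
  have "s = t" using cis2pi_inj[of s t] s t t01 s01 by auto
  hence "real k \<le> t * n" "t * n < real k + 1" "real j \<le> t * n" "t * n < real j + 1"
    using s t npos by (auto simp: field_simps)
  hence "j = k" by linarith
  thus False using assms by simp
qed

lemma riemann_upper:
  fixes \<psi> :: "real \<Rightarrow> real"
  assumes cont: "continuous_on {0..1} \<psi>" and n: "0 < n"
    and bnd: "\<And>k t. k < n \<Longrightarrow> t \<in> {real k / real n .. real (k+1) / real n} \<Longrightarrow> \<psi> t \<le> u k"
  shows "integral {0..1} \<psi> \<le> (\<Sum>k<n. u k / real n)"
proof -
  have npos: "real n > 0" using n by simp
  have int: "\<psi> integrable_on {a..b}" if "0 \<le> a" "b \<le> 1" for a b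
    by (rule integrable_continuous_interval, rule continuous_on_subset[OF cont]) (use that in auto)
  have "j \<le> n \<Longrightarrow> integral {0..real j / real n} \<psi> \<le> (\<Sum>k<j. u k / real n)" for j
  proof (induction j)
    case 0 thus ?case by simp
  next
    case (Suc j)
    have le1: "real (Suc j) / real n \<le> 1" using Suc.prems npos by (simp add: field_simps)
    have le0: "real j / real n \<le> real (Suc j) / real n" using npos by (simp add: divide_right_mono)
    have "integral {0..real (Suc j) / real n} \<psi> = integral {0..real j / real n} \<psi> + integral {real j / real n..real (Suc j) / real n} \<psi>"
      by (rule Henstock_Kurzweil_Integration.integral_combine[symmetric]) (use le0 le1 int in auto)
    also have "integral {real j / real n..real (Suc j) / real n} \<psi> \<le> integral {real j / real n..real (Suc j) / real n} (\<lambda>_. u j)"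
      by (rule integral_le) (use int le0 le1 bnd[of j] Suc.prems in auto)
    also have "\<dots> = u j / real n" using npos le0 by (simp add: field_simps)
    finally show ?case using Suc by simp
  qed
  from this[of n] show ?thesis using npos by simp
qed

lemma arc_lower:
  fixes \<mu> :: "complex measure" and g :: "complex \<Rightarrow> real"
  assumes sets: "sets \<mu> = sets borel" and C: "0 < C"
    and arcs: "\<And>I. is_arc I \<Longrightarrow> emeasure \<mu> I \<ge> ennreal C * emeasure circle_measure I"
    and cont: "continuous_on (cball 0 1) g" and nonneg: "\<And>z. 0 \<le> g z"
  shows "ennreal (C * integral {0..1} (\<lambda>t. g (cis (2*pi*t)))) \<le> (\<integral>\<^sup>+ z\<in>cball 0 1. ennreal (g z) \<partial>\<mu>)"
proof (rule ennreal_le_epsilon)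
  fix e :: real assume e: "0 < e"
  define \<psi> where "\<psi> = (\<lambda>t. g (cis (2*pi*t)))"
  have c\<psi>: "continuous_on UNIV \<psi>" using circ_cont[OF cont, of 1] by (simp add: \<psi>_def)
  have uc: "uniformly_continuous_on {0..1} \<psi>"
    by (rule compact_uniformly_continuous[OF continuous_on_subset[OF c\<psi>]]) auto
  define \<epsilon> where "\<epsilon> = e / (2 * C)"
  have \<epsilon>: "0 < \<epsilon>" using e C by (simp add: \<epsilon>_def)
  obtain d where d: "d > 0" "\<And>x x'. x \<in> {0..1} \<Longrightarrow> x' \<in> {0..1} \<Longrightarrow> dist x' x < d \<Longrightarrow> dist (\<psi> x') (\<psi> x) < \<epsilon>"
    using uc \<epsilon> unfolding uniformly_continuous_on_def by metis
  define n where "n = max 2 (nat \<lceil>1 / d\<rceil> + 1)"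
  have n2: "2 \<le> n" by (simp add: n_def)
  have npos: "real n > 0" using n2 by simp
  have nd: "1 / real n < d"
  proof -
    have "1 / d < real n" unfolding n_def by linarith
    thus ?thesis using d npos by (simp add: field_simps)
  qed
  define b where "b = (\<lambda>k. max (\<psi> (real k / real n) - \<epsilon>) 0)"
  have near: "\<bar>\<psi> t - \<psi> (real k / real n)\<bar> < \<epsilon>" if "k < n" "t \<in> {real k / real n .. real (k+1) / real n}" for k t
  proof -
    have k1: "real k / real n \<in> {0..1}" using that npos by (auto simp: field_simps)
    have t1: "t \<in> {0..1}"
    proof -
      have "real (k+1) / real n \<le> 1" using that npos by (simp add: field_simps)
      moreover have "0 \<le> real k / real n" by simp
      moreover have "real k / real n \<le> t" "t \<le> real (k+1) / real n" using that(2) by auto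
      ultimately have "0 \<le> t" "t \<le> 1" by linarith+
      thus ?thesis by simp
    qed
    have "real (k+1) / real n - real k / real n = 1 / real n" using npos by (simp add: field_simps)
    moreover have "t \<le> real (k+1) / real n" using that(2) by auto
    ultimately have "t - real k / real n \<le> 1 / real n" by linarith
    hence "dist t (real k / real n) < d" using that(2) nd by (simp add: dist_real_def)
    from d(2)[OF k1 t1 this] show ?thesis by (simp add: dist_real_def)
  qed
  have pw: "(\<Sum>k<n. ennreal (b k) * indicator (arcI n k) z) \<le> ennreal (g z) * indicator (cball 0 1) z" for z
  proof (cases "\<exists>j<n. z \<in> arcI n j")
    case False
    hence "(\<Sum>k<n. ennreal (b k) * indicator (arcI n k) z) = 0" by (intro sum.neutral) auto
    thus ?thesis by simp
  next
    case True
    then obtain j where j: "j < n" "z \<in> arcI n j" by auto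
    have "(\<Sum>k<n. ennreal (b k) * indicator (arcI n k) z) = ennreal (b j) * indicator (arcI n j) z
        + (\<Sum>k\<in>{..<n}-{j}. ennreal (b k) * indicator (arcI n k) z)"
      by (rule sum.remove) (use j in auto)
    also have "(\<Sum>k\<in>{..<n}-{j}. ennreal (b k) * indicator (arcI n k) z) = 0"
      by (intro sum.neutral) (use arc_disj[OF j(1) _ _ j(2)] in auto)
    finally have s: "(\<Sum>k<n. ennreal (b k) * indicator (arcI n k) z) = ennreal (b j)" using j by simp
    obtain t where t: "t \<in> {real j / real n ..< real (j+1) / real n}" "z = cis (2*pi*t)"
      using j(2) by (auto simp: arcI_def)
    have "\<bar>\<psi> t - \<psi> (real j / real n)\<bar> < \<epsilon>" by (rule near) (use j t in auto)
    hence "b j \<le> \<psi> t" using nonneg by (auto simp: b_def \<psi>_def)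
    hence "b j \<le> g z" using t by (simp add: \<psi>_def)
    moreover have "z \<in> cball 0 1" using t by simp
    ultimately show ?thesis using s by (simp add: ennreal_leI)
  qed
  have sets_arc: "arcI n k \<in> sets \<mu>" if "k < n" for k using arc_basic(2)[OF n2 that] sets by simp
  have "ennreal (\<Sum>k<n. b k * C / real n) = (\<Sum>k<n. ennreal (b k) * (ennreal C * ennreal (1 / real n)))"
  proof -
    have "ennreal (b k) * (ennreal C * ennreal (1 / real n)) = ennreal (b k * C / real n)" for k
      using C by (simp add: b_def ennreal_mult[symmetric])
    moreover have "ennreal (\<Sum>k<n. b k * C / real n) = (\<Sum>k<n. ennreal (b k * C / real n))"
      using C npos by (intro sum_ennreal[symmetric]) (auto simp: b_def)
    ultimately show ?thesis by simp
  qed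
  also have "\<dots> \<le> (\<Sum>k<n. ennreal (b k) * emeasure \<mu> (arcI n k))"
  proof (rule sum_mono)
    fix k assume k: "k \<in> {..<n}"
    have "ennreal C * ennreal (1 / real n) \<le> ennreal C * emeasure circle_measure (arcI n k)"
      using arc_basic(4)[OF n2] k by (intro mult_left_mono) auto
    also have "\<dots> \<le> emeasure \<mu> (arcI n k)" using arcs arc_basic(1)[OF n2] k by auto
    finally show "ennreal (b k) * (ennreal C * ennreal (1 / real n)) \<le> ennreal (b k) * emeasure \<mu> (arcI n k)"
      by (intro mult_left_mono) auto
  qed
  also have "\<dots> = (\<integral>\<^sup>+ z. (\<Sum>k<n. ennreal (b k) * indicator (arcI n k) z) \<partial>\<mu>)"
    by (subst nn_integral_sum) (auto simp: nn_integral_cmult_indicator sets_arc intro!: borel_measurable_times_ennreal borel_measurable_indicator)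
  also have "\<dots> \<le> (\<integral>\<^sup>+ z\<in>cball 0 1. ennreal (g z) \<partial>\<mu>)"
    by (rule nn_integral_mono) (use pw in auto)
  finally have L: "ennreal (\<Sum>k<n. b k * C / real n) \<le> (\<integral>\<^sup>+ z\<in>cball 0 1. ennreal (g z) \<partial>\<mu>)" .
  have "integral {0..1} \<psi> \<le> (\<Sum>k<n. (\<psi> (real k / real n) + \<epsilon>) / real n)"
  proof (rule riemann_upper[OF continuous_on_subset[OF c\<psi>]])
    fix k t assume "k < n" "t \<in> {real k / real n..real (k + 1) / real n}"
    from near[OF this] show "\<psi> t \<le> \<psi> (real k / real n) + \<epsilon>" by linarith
  qed (use npos in auto)
  also have "\<dots> \<le> (\<Sum>k<n. (b k + 2 * \<epsilon>) / real n)"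
    by (intro sum_mono divide_right_mono) (auto simp: b_def)
  also have "\<dots> = (\<Sum>k<n. b k / real n) + 2 * \<epsilon>"
    using npos by (simp add: add_divide_distrib sum.distrib)
  finally have "C * integral {0..1} \<psi> \<le> C * ((\<Sum>k<n. b k / real n) + 2 * \<epsilon>)"
    using C by (intro mult_left_mono) auto
  also have "\<dots> = (\<Sum>k<n. b k * C / real n) + e"
    using C by (simp add: \<epsilon>_def distrib_left sum_distrib_left mult_ac)
  finally have R: "C * integral {0..1} \<psi> \<le> (\<Sum>k<n. b k * C / real n) + e" .
  have "ennreal (C * integral {0..1} \<psi>) \<le> ennreal ((\<Sum>k<n. b k * C / real n) + e)"
    by (rule ennreal_leI[OF R])
  also have "\<dots> = ennreal (\<Sum>k<n. b k * C / real n) + ennreal e"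
    using C e by (intro ennreal_plus) (auto intro!: sum_nonneg simp: b_def)
  also have "\<dots> \<le> (\<integral>\<^sup>+ z\<in>cball 0 1. ennreal (g z) \<partial>\<mu>) + ennreal e"
    using L by (rule add_right_mono)
  finally show "ennreal (C * integral {0..1} (\<lambda>t. g (cis (2*pi*t)))) \<le> (\<integral>\<^sup>+ z\<in>cball 0 1. ennreal (g z) \<partial>\<mu>) + ennreal e"
    by (simp add: \<psi>_def)
qed


lemma hardy_pow_scale:
  assumes cF: "continuous_on (cball 0 1) F" and c: "0 < c" and p: "0 < p"
  shows "hardy_pow p (\<lambda>z. F z / of_real c) = hardy_pow p F * ennreal (1 / c powr p)"
  unfolding hardy_pow_def SUP_mult_right_ennreal
proof (rule SUP_cong[OF refl])
  fix r :: real assume r: "r \<in> {0<..<1}"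
  have cF': "continuous_on (cball 0 1) (\<lambda>z. F z / of_real c)" by (intro continuous_intros cF) (use c in auto)
  have "(\<integral>\<^sup>+ t\<in>{0..1::real}. ennreal (cmod (F (of_real r * cis (2*pi*t)) / of_real c) powr p) \<partial>lborel)
     = ennreal (integral {0..1} (\<lambda>t. cmod (F (of_real r * cis (2*pi*t)) / of_real c) powr p))"
    using nn_circ[OF cF', of r p] r p by simp
  also have "integral {0..1} (\<lambda>t. cmod (F (of_real r * cis (2*pi*t)) / of_real c) powr p)
     = integral {0..1} (\<lambda>t. cmod (F (of_real r * cis (2*pi*t))) powr p * (1 / c powr p))"
    using c by (simp add: norm_divide powr_divide)
  also have "\<dots> = integral {0..1} (\<lambda>t. cmod (F (of_real r * cis (2*pi*t))) powr p) * (1 / c powr p)"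
    by (rule integral_mult_left)
  also have "ennreal \<dots> = ennreal (integral {0..1} (\<lambda>t. cmod (F (of_real r * cis (2*pi*t))) powr p)) * ennreal (1 / c powr p)"
    by (rule ennreal_mult'') simp
  also have "ennreal (integral {0..1} (\<lambda>t. cmod (F (of_real r * cis (2*pi*t))) powr p))
     = (\<integral>\<^sup>+ t\<in>{0..1::real}. ennreal (cmod (F (of_real r * cis (2*pi*t))) powr p) \<partial>lborel)"
    using nn_circ[OF cF, of r p] r p by simp
  finally show "(\<integral>\<^sup>+ t\<in>{0..1::real}. ennreal (cmod (F (of_real r * cis (2*pi*t)) / of_real c) powr p) \<partial>lborel)
     = (\<integral>\<^sup>+ t\<in>{0..1::real}. ennreal (cmod (F (of_real r * cis (2*pi*t))) powr p) \<partial>lborel) * ennreal (1 / c powr p)" .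
qed

lemma kernel_den:
  assumes "a \<in> ball 0 1" "cmod w \<le> 1"
  shows "1 - cnj a * w \<noteq> 0" "1 - cmod a \<le> cmod (1 - cnj a * w)" "cmod (1 - cnj a * w) \<le> 2"
proof -
  have aw: "cmod (cnj a * w) \<le> cmod a" using assms by (simp add: norm_mult mult_left_le)
  have a1: "cmod a < 1" using assms by simp
  have "1 - cmod (cnj a * w) \<le> cmod (1 - cnj a * w)"
    using norm_triangle_ineq2[of 1 "cnj a * w"] by simp
  thus "1 - cmod a \<le> cmod (1 - cnj a * w)" using aw by linarith
  thus "1 - cnj a * w \<noteq> 0" using a1 by auto
  have "cmod (1 - cnj a * w) \<le> 1 + cmod (cnj a * w)" using norm_triangle_ineq4[of 1 "cnj a * w"] by simp
  thus "cmod (1 - cnj a * w) \<le> 2" using aw a1 by linarith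
qed

lemma kernel_facts:
  assumes a: "a \<in> ball 0 1"
  shows "continuous_on (cball 0 1) (\<lambda>w. kernel a w ^ l)" "(\<lambda>w. kernel a w ^ l) holomorphic_on ball 0 1"
proof -
  have "(\<lambda>w. kernel a w ^ l) holomorphic_on cball 0 1"
    unfolding kernel_def using kernel_den(1)[OF a] by (intro holomorphic_intros) auto
  thus "continuous_on (cball 0 1) (\<lambda>w. kernel a w ^ l)" by (rule holomorphic_on_imp_continuous_on)
  show "(\<lambda>w. kernel a w ^ l) holomorphic_on ball 0 1"
    by (rule holomorphic_on_subset[OF \<open>_ holomorphic_on cball 0 1\<close>]) auto
qed

lemma kernel_E_bounds:
  assumes a: "a \<in> ball 0 1" and p: "0 < p"
  shows "0 < hardy_pow p (\<lambda>w. kernel a w ^ l)" "hardy_pow p (\<lambda>w. kernel a w ^ l) < \<infinity>"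
proof -
  note kf = kernel_facts[OF a, of l]
  have "hardy_pow p (\<lambda>w. kernel a w ^ l) \<le> ennreal (integral {0..1} (\<lambda>t. cmod (kernel a (cis (2*pi*t)) ^ l) powr p))"
    by (rule hardy_pow_le[OF kf p])
  thus "hardy_pow p (\<lambda>w. kernel a w ^ l) < \<infinity>" by (rule le_less_trans) simp
  define c0 where "c0 = ((1/2)^l) powr p"
  have c0: "0 < c0" by (simp add: c0_def)
  have "(\<integral>\<^sup>+ t\<in>{0..1::real}. ennreal (cmod (kernel a (of_real (1/2) * cis (2*pi*t)) ^ l) powr p) \<partial>lborel)
      \<ge> (\<integral>\<^sup>+ t\<in>{0..1::real}. ennreal c0 \<partial>lborel)"
  proof (rule nn_integral_mono)
    fix t :: real
    let ?w = "of_real (1/2) * cis (2*pi*t) :: complex"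
    have w: "cmod ?w \<le> 1" by (simp add: norm_mult)
    have "1/2 \<le> cmod (kernel a ?w)"
      using kernel_den[OF a w] by (simp add: kernel_def norm_divide field_simps)
    hence "(1/2)^l \<le> cmod (kernel a ?w ^ l)" by (simp add: norm_power power_mono)
    hence "c0 \<le> cmod (kernel a ?w ^ l) powr p" unfolding c0_def using p by (intro powr_mono2) auto
    thus "ennreal c0 * indicator {0..1} t \<le> ennreal (cmod (kernel a ?w ^ l) powr p) * indicator {0..1} t"
      by (auto intro: ennreal_leI simp: indicator_def)
  qed
  moreover have "(\<integral>\<^sup>+ t\<in>{0..1::real}. ennreal c0 \<partial>lborel) = ennreal c0"
    by (simp add: nn_integral_cmult_indicator)
  moreover have "(\<integral>\<^sup>+ t\<in>{0..1::real}. ennreal (cmod (kernel a (of_real (1/2) * cis (2*pi*t)) ^ l) powr p) \<partial>lborel)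
      \<le> hardy_pow p (\<lambda>w. kernel a w ^ l)"
    unfolding hardy_pow_def by (rule SUP_upper) auto
  ultimately have "ennreal c0 \<le> hardy_pow p (\<lambda>w. kernel a w ^ l)" by simp
  moreover have "0 < ennreal c0" using c0 by simp
  ultimately show "0 < hardy_pow p (\<lambda>w. kernel a w ^ l)" by (rule order_less_le_trans[rotated])
qed

lemma norm_kernel_facts:
  assumes a: "a \<in> ball 0 1" and p: "0 < p"
  shows "hardy_pow p (norm_kernel p l a) = 1" "continuous_on (cball 0 1) (norm_kernel p l a)"
    "norm_kernel p l a holomorphic_on ball 0 1"
proof -
  define E where "E = hardy_pow p (\<lambda>w. kernel a w ^ l)"
  have E: "0 < E" "E < \<infinity>" using kernel_E_bounds[OF a p] by (auto simp: E_def)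
  define N where "N = hardy_norm p (\<lambda>w. kernel a w ^ l)"
  have eE: "0 < enn2real E" using E by (simp add: enn2real_positive_iff)
  have N: "N = enn2real E powr (1/p)" by (simp add: N_def hardy_norm_def E_def)
  have Npos: "0 < N" using eE by (simp add: N)
  have Np: "N powr p = enn2real E" using eE p by (simp add: N powr_powr)
  have nk: "norm_kernel p l a = (\<lambda>z. kernel a z ^ l / of_real N)"
    by (rule ext) (simp add: norm_kernel_def N_def)
  note kf = kernel_facts[OF a, of l]
  have "hardy_pow p (norm_kernel p l a) = E * ennreal (1 / enn2real E)"
    unfolding nk hardy_pow_scale[OF kf(1) Npos p] Np E_def ..
  also have "\<dots> = ennreal (enn2real E) * ennreal (1 / enn2real E)" using E by (simp add: ennreal_enn2real_if)
  also have "\<dots> = 1" using eE by (simp flip: ennreal_mult)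
  finally show "hardy_pow p (norm_kernel p l a) = 1" .
  show "continuous_on (cball 0 1) (norm_kernel p l a)" unfolding nk by (intro continuous_intros kf(1)) (use Npos in auto)
  show "norm_kernel p l a holomorphic_on ball 0 1" unfolding nk by (intro holomorphic_intros kf(2)) (use Npos in auto)
qed


lemma periodic_nat: assumes "\<And>x. G (x + 1) = (G x :: real)" shows "G (x + real n) = G x"
proof (induction n)
  case (Suc n)
  have "G (x + real (Suc n)) = G ((x + real n) + 1)" by (simp add: algebra_simps)
  also have "\<dots> = G (x + real n)" by (rule assms)
  finally show ?case using Suc by simp
qed simp

lemma periodic_int: assumes "\<And>x. G (x + 1) = (G x :: real)" shows "G (x + real_of_int k) = G x"
proof (cases "k \<ge> 0")
  case True
  define n where "n = nat k"
  have "k = int n" using True by (simp add: n_def)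
  thus ?thesis using periodic_nat[of G, OF assms] by simp
next
  case False
  define n where "n = nat (- k)"
  have n: "k = - int n" using False by (simp add: n_def)
  have "G x = G ((x - real n) + real n)" by simp
  also have "\<dots> = G (x - real n)" by (rule periodic_nat[of G, OF assms])
  finally show ?thesis using n by simp
qed

lemma periodic_integral:
  fixes G :: "real \<Rightarrow> real"
  assumes cont: "continuous_on UNIV G" and per: "\<And>x. G (x + 1) = G x"
  shows "integral {c..c+1} G = integral {0..1} G"
proof -
  have int: "G integrable_on {a..b}" for a b
    by (rule integrable_continuous_interval[OF continuous_on_subset[OF cont]]) auto
  define k where "k = \<lfloor>c\<rfloor>"
  define c' where "c' = c - real_of_int k"
  have c': "0 \<le> c'" "c' < 1" unfolding c'_def k_def by linarith+
  have "integral {c..c+1} G = integral {c - real_of_int k..c + 1 - real_of_int k} (\<lambda>x. G (x + real_of_int k))"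
    by (rule integral_shift_real_ivl[symmetric])
  also have "\<dots> = integral {c'..c'+1} G"
    using periodic_int[of G, OF per] by (simp add: c'_def algebra_simps)
  also have "\<dots> = integral {c'..1} G + integral {1..c'+1} G"
    by (rule Henstock_Kurzweil_Integration.integral_combine[symmetric]) (use c' int in auto)
  also have "integral {1..c'+1} G = integral {1 - 1..c' + 1 - 1} (\<lambda>x. G (x + 1))"
    by (rule integral_shift_real_ivl[symmetric])
  also have "\<dots> = integral {0..c'} G" using per by simp
  also have "integral {c'..1} G + integral {0..c'} G = integral {0..1} G"
    using Henstock_Kurzweil_Integration.integral_combine[of 0 c' 1 G] c' int by simp
  finally show ?thesis .
qed

lemma periodic_integral_le:
  fixes G :: "real \<Rightarrow> real"
  assumes cont: "continuous_on UNIV G" and per: "\<And>x. G (x + 1) = G x" and nn: "\<And>x. 0 \<le> G x"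
    and ab: "a \<le> b" "b \<le> a + 1"
  shows "integral {a..b} G \<le> integral {0..1} G"
proof -
  have int: "G integrable_on {a..b}" for a b
    by (rule integrable_continuous_interval[OF continuous_on_subset[OF cont]]) auto
  have "integral {a..b} G \<le> integral {a..a+1} G"
    by (rule integral_subset_le) (use ab int nn in auto)
  also have "\<dots> = integral {0..1} G" by (rule periodic_integral[OF cont per])
  finally show ?thesis .
qed

lemma cis_per: "cis (2*pi*(x+1)) = cis (2*pi*x)"
  by (simp add: distrib_left cis_mult[symmetric])

lemma kernel_rot: "kernel (of_real \<rho> * cis (2*pi*\<theta>)) z = kernel (of_real \<rho>) (z * cis (-(2*pi*\<theta>)))"
  by (simp add: kernel_def cis_cnj mult_ac)

definition KE :: "real \<Rightarrow> nat \<Rightarrow> real \<Rightarrow> ennreal" where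
  "KE p l \<rho> = hardy_pow p (\<lambda>w. kernel (of_real \<rho>) w ^ l)"

lemma KE_rot:
  assumes \<rho>: "0 \<le> \<rho>" "\<rho> < 1" and p: "0 < p"
  shows "hardy_pow p (\<lambda>w. kernel (of_real \<rho> * cis (2*pi*\<theta>)) w ^ l) = KE p l \<rho>"
  unfolding KE_def hardy_pow_def
proof (rule SUP_cong[OF refl])
  fix r :: real assume r: "r \<in> {0<..<1}"
  have a1: "of_real \<rho> * cis (2*pi*\<theta>) \<in> ball 0 1" using \<rho> by (simp add: norm_mult)
  have a2: "(of_real \<rho> :: complex) \<in> ball 0 1" using \<rho> by simp
  define G where "G = (\<lambda>u. cmod (kernel (of_real \<rho>) (of_real r * cis (2*pi*u)) ^ l) powr p)"
  have cG: "continuous_on UNIV G" unfolding G_def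
    by (intro cont_powr_norm[OF circ_cont[OF kernel_facts(1)[OF a2]]]) (use r p in auto)
  have per: "G (x + 1) = G x" for x by (simp add: G_def cis_per)
  have eq: "cmod (kernel (of_real \<rho> * cis (2*pi*\<theta>)) (of_real r * cis (2*pi*t)) ^ l) powr p = G (t + - \<theta>)" for t
  proof -
    have c: "cis (2*pi*t) * cis (-(2*pi*\<theta>)) = cis (2*pi*(t + -\<theta>))"
      by (subst cis_mult) (simp add: right_diff_distrib)
    have "of_real r * cis (2*pi*t) * cis (-(2*pi*\<theta>)) = of_real r * cis (2*pi*(t + -\<theta>))"
      by (metis c mult.assoc)
    thus ?thesis by (simp only: G_def kernel_rot)
  qed
  have "(\<integral>\<^sup>+ t\<in>{0..1::real}. ennreal (cmod (kernel (of_real \<rho> * cis (2*pi*\<theta>)) (of_real r * cis (2*pi*t)) ^ l) powr p) \<partial>lborel)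
      = ennreal (integral {0..1} (\<lambda>t. cmod (kernel (of_real \<rho> * cis (2*pi*\<theta>)) (of_real r * cis (2*pi*t)) ^ l) powr p))"
    using nn_circ[OF kernel_facts(1)[OF a1], of r p] r p by simp
  also have "integral {0..1} (\<lambda>t. cmod (kernel (of_real \<rho> * cis (2*pi*\<theta>)) (of_real r * cis (2*pi*t)) ^ l) powr p)
      = integral {0..1} (\<lambda>t. G (t + - \<theta>))" by (simp only: eq)
  also have "\<dots> = integral {-\<theta>..-\<theta>+1} G"
    using integral_shift_real_ivl[where a="-\<theta>" and b="1 - \<theta>" and c="-\<theta>" and f=G] by (simp add: algebra_simps)
  also have "\<dots> = integral {0..1} G" by (rule periodic_integral[OF cG per])
  also have "ennreal (integral {0..1} G) = (\<integral>\<^sup>+ t\<in>{0..1::real}. ennreal (cmod (kernel (of_real \<rho>) (of_real r * cis (2*pi*t)) ^ l) powr p) \<partial>lborel)"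
    using nn_circ[OF kernel_facts(1)[OF a2], of r p] r p by (simp add: G_def)
  finally show "(\<integral>\<^sup>+ t\<in>{0..1::real}. ennreal (cmod (kernel (of_real \<rho> * cis (2*pi*\<theta>)) (of_real r * cis (2*pi*t)) ^ l) powr p) \<partial>lborel)
      = (\<integral>\<^sup>+ t\<in>{0..1::real}. ennreal (cmod (kernel (of_real \<rho>) (of_real r * cis (2*pi*t)) ^ l) powr p) \<partial>lborel)" .
qed


definition Mk :: "real \<Rightarrow> nat \<Rightarrow> real \<Rightarrow> real \<Rightarrow> real" where
  "Mk p l \<rho> x = integral {0..1} (\<lambda>t. cmod (kernel (of_real \<rho>) (of_real x * cis (2*pi*t)) ^ l) powr p)"

lemma knorm:
  assumes "1 - cnj a * z \<noteq> 0"
  shows "cmod (kernel a z ^ l) powr p = cmod (1 - cnj a * z) powr (-(p * real l))"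
proof -
  define D where "D = cmod (1 - cnj a * z)"
  have D: "0 < D" using assms by (simp add: D_def)
  have "cmod (kernel a z ^ l) = (1 / D) ^ l" by (simp add: kernel_def D_def norm_power norm_divide)
  also have "\<dots> = (1 / D) powr real l" using D by (simp add: powr_realpow)
  finally have "cmod (kernel a z ^ l) powr p = (1 / D) powr (real l * p)" by (simp add: powr_powr)
  also have "\<dots> = D powr (-(p * real l))" using D by (simp add: powr_divide powr_minus_divide mult.commute)
  finally show ?thesis by (simp add: D_def)
qed

lemma kernel_real_hol:
  assumes \<rho>: "0 \<le> \<rho>" "\<rho> < 1"
  shows "(\<lambda>w. kernel (of_real \<rho>) w ^ l) holomorphic_on ball 0 (2 / (1 + \<rho>))"
    "\<And>w. w \<in> ball 0 (2 / (1 + \<rho>)) \<Longrightarrow> kernel (of_real \<rho>) w ^ l \<noteq> 0"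
    "1 < 2 / (1 + \<rho>)"
proof -
  have nz: "1 - cnj (of_real \<rho>) * w \<noteq> 0" if "w \<in> ball 0 (2 / (1 + \<rho>))" for w
  proof -
    have "cmod w * (1 + \<rho>) < 2" using that \<rho> by (simp add: field_simps)
    moreover have "\<rho> * cmod w \<le> cmod w" using \<rho> by (simp add: mult_left_le_one_le)
    ultimately have "\<rho> * cmod w < 1" by (simp add: algebra_simps)
    hence "cmod (cnj (of_real \<rho>) * w) < 1" using \<rho> by (simp add: norm_mult)
    thus ?thesis by (metis norm_one order_less_irrefl eq_iff_diff_eq_0)
  qed
  show "(\<lambda>w. kernel (of_real \<rho>) w ^ l) holomorphic_on ball 0 (2 / (1 + \<rho>))"
    unfolding kernel_def using nz by (intro holomorphic_intros) auto
  show "\<And>w. w \<in> ball 0 (2 / (1 + \<rho>)) \<Longrightarrow> kernel (of_real \<rho>) w ^ l \<noteq> 0"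
    using nz by (simp add: kernel_def)
  show "1 < 2 / (1 + \<rho>)" using \<rho> by (simp add: field_simps)
qed

lemma Mk_mono:
  assumes \<rho>: "0 \<le> \<rho>" "\<rho> < 1" and x: "0 \<le> x" "x \<le> 1" and p: "0 < p"
  shows "Mk p l \<rho> x \<le> Mk p l \<rho> 1"
proof (cases "x = 1")
  case False
  note h = kernel_real_hol(1,2)[OF \<rho>, where l=l]
  from Mp_mono_nz[OF h(1) h(2) x(1) _ kernel_real_hol(3)[OF \<rho>] p] False x show ?thesis
    by (simp add: Mk_def)
qed simp

lemma Mk_le_KE:
  assumes \<rho>: "0 \<le> \<rho>" "\<rho> < 1" and p: "0 < p"
  shows "ennreal (Mk p l \<rho> 1) \<le> KE p l \<rho>"
proof -
  have a: "(of_real \<rho> :: complex) \<in> ball 0 1" using \<rho> by simp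
  note kc = kernel_facts(1)[OF a, of l]
  define F where "F = (\<lambda>(x,t). cmod (kernel (of_real \<rho>) (of_real x * cis (2*pi*t)) ^ l) powr p)"
  have cF: "continuous_on ({0..1} \<times> cbox 0 1) F"
  proof -
    have "continuous_on ({0..1} \<times> cbox 0 1) (\<lambda>y. kernel (of_real \<rho>) (of_real (fst y) * cis (2*pi * snd y)) ^ l)"
      by (rule continuous_on_compose2[OF kc]) (auto intro!: continuous_intros simp: norm_mult)
    thus ?thesis unfolding F_def case_prod_unfold by (rule cont_powr_norm[OF _ p])
  qed
  have cM: "continuous_on {0..1} (\<lambda>x. Mk p l \<rho> x)"
    using integral_continuous_on_param[OF cF[unfolded F_def]] by (simp add: Mk_def cbox_interval)
  show ?thesis
  proof (rule ennreal_le_epsilon)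
    fix e :: real assume e: "0 < e"
    have "\<forall>x\<in>{0..1}. \<forall>e>0. \<exists>d>0. \<forall>x'\<in>{0..1}. dist x' x < d \<longrightarrow> dist (Mk p l \<rho> x') (Mk p l \<rho> x) < e"
      using cM unfolding continuous_on_iff .
    hence "\<exists>d>0. \<forall>x'\<in>{0..1}. dist x' 1 < d \<longrightarrow> dist (Mk p l \<rho> x') (Mk p l \<rho> 1) < e"
      using e by simp
    then obtain d where d: "d > 0" "\<And>x'. x' \<in> {0..1} \<Longrightarrow> dist x' 1 < d \<Longrightarrow> dist (Mk p l \<rho> x') (Mk p l \<rho> 1) < e"
      by blast
    define x where "x = max (1/2) (1 - d/2)"
    have x: "0 < x" "x < 1" "dist x 1 < d" using d by (auto simp: x_def dist_real_def)
    have "Mk p l \<rho> 1 \<le> Mk p l \<rho> x + e" using d(2)[of x] x by (auto simp: dist_real_def)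
    hence "ennreal (Mk p l \<rho> 1) \<le> ennreal (Mk p l \<rho> x + e)" by (rule ennreal_leI)
    also have "\<dots> = ennreal (Mk p l \<rho> x) + ennreal e"
    proof -
      have Mx0: "0 \<le> Mk p l \<rho> x" unfolding Mk_def by (rule integral_nonneg[OF circ_int[OF kc]]) (use x p in auto)
      show ?thesis by (rule ennreal_plus[OF Mx0]) (use e in simp)
    qed
    finally have L1: "ennreal (Mk p l \<rho> 1) \<le> ennreal (Mk p l \<rho> x) + ennreal e" .
    have "ennreal (Mk p l \<rho> x) \<le> KE p l \<rho>"
    proof -
      have "ennreal (Mk p l \<rho> x) = (\<integral>\<^sup>+ t\<in>{0..1::real}. ennreal (cmod (kernel (of_real \<rho>) (of_real x * cis (2*pi*t)) ^ l) powr p) \<partial>lborel)"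
        using nn_circ[OF kc, of x p] x p by (simp add: Mk_def)
      also have "\<dots> \<le> KE p l \<rho>" unfolding KE_def hardy_pow_def by (rule SUP_upper) (use x in auto)
      finally show ?thesis .
    qed
    hence "ennreal (Mk p l \<rho> x) + ennreal e \<le> KE p l \<rho> + ennreal e" by (rule add_right_mono)
    with L1 show "ennreal (Mk p l \<rho> 1) \<le> KE p l \<rho> + ennreal e" by (rule order_trans)
  qed
qed


lemma norm_1_cis: "cmod (1 - cis \<theta>) \<le> \<bar>\<theta>\<bar>"
proof -
  have "(cmod (1 - cis \<theta>))^2 = (1 - cos \<theta>)^2 + (sin \<theta>)^2" by (simp add: cmod_power2)
  also have "\<dots> = 2 - 2 * cos \<theta>" using sin_cos_squared_add[of \<theta>] by (simp add: power2_eq_square algebra_simps)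
  also have "\<dots> = 4 * (sin (\<theta>/2))^2" using cos_double_sin[of "\<theta>/2"] by simp
  also have "\<dots> = (2 * sin (\<theta>/2))^2" by (simp add: power2_eq_square)
  also have "\<dots> \<le> \<theta>^2"
  proof -
    have "\<bar>2 * sin (\<theta>/2)\<bar> \<le> \<bar>\<theta>\<bar>" using abs_sin_x_le_abs_x[of "\<theta>/2"] by simp
    thus ?thesis by (metis power2_abs power_mono abs_ge_zero)
  qed
  finally show ?thesis by (metis abs_ge_zero power2_abs power2_le_imp_le)
qed

lemma D_upper:
  assumes "0 \<le> x" "x \<le> 1" "0 \<le> t"
  shows "cmod (1 - of_real x * cis (2*pi*t)) \<le> (1 - x) + 2*pi*t"
proof -
  have "1 - of_real x * cis (2*pi*t) = of_real (1 - x) + of_real x * (1 - cis (2*pi*t))" by (simp add: algebra_simps)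
  hence "cmod (1 - of_real x * cis (2*pi*t)) \<le> cmod (of_real (1 - x) :: complex) + cmod (of_real x * (1 - cis (2*pi*t)))"
    by (metis norm_triangle_ineq)
  also have "\<dots> = (1 - x) + x * cmod (1 - cis (2*pi*t))" using assms by (simp only: norm_mult norm_of_real abs_of_nonneg diff_ge_0_iff_ge)
  also have "x * cmod (1 - cis (2*pi*t)) \<le> 1 * \<bar>2*pi*t\<bar>"
    using assms norm_1_cis[of "2*pi*t"] by (intro mult_mono) auto
  finally show ?thesis using assms by simp
qed

lemma KE_large:
  assumes p: "0 < p" and s: "p * real l > 1" and B: "0 < B" and \<delta>: "0 < \<delta>"
  obtains \<rho> where "1 - \<delta> \<le> \<rho>" "\<rho> < 1" "0 \<le> \<rho>" "ennreal B \<le> KE p l \<rho>"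
proof -
  define s where "s = p * real l"
  define A where "A = (1 + 2*pi) powr (-s)"
  have "1 + 2*pi \<noteq> 0" using pi_gt_zero by linarith
  hence A: "0 < A" by (simp add: A_def)
  define y where "y = min (1/2) (min \<delta> ((B / A) powr (1 / (1 - s))))"
  have y: "0 < y" "y \<le> 1/2" "y \<le> \<delta>" "y \<le> (B / A) powr (1 / (1 - s))" using \<delta> B A by (auto simp: y_def)
  define x where "x = 1 - y"
  have x: "1/2 \<le> x" "x < 1" using y by (auto simp: x_def)
  define \<rho> where "\<rho> = sqrt x"
  have \<rho>01: "0 \<le> \<rho>" "\<rho> < 1" "\<rho> * \<rho> = x" using x by (auto simp: \<rho>_def)
  have "x \<le> \<rho>"
  proof -
    have "\<rho> * \<rho> \<le> \<rho> * 1" using \<rho>01 by (intro mult_left_mono) auto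
    thus ?thesis using \<rho>01 by simp
  qed
  note \<rho> = \<rho>01(1,2) this \<rho>01(3)
  have nzx: "cmod (1 - of_real x * cis (2*pi*t)) \<noteq> 0" for t
  proof -
    have "cmod (of_real x * cis (2*pi*t)) < 1" using x by (simp add: norm_mult)
    thus ?thesis by auto
  qed
  have c: "continuous_on UNIV (\<lambda>t. cmod (1 - of_real x * cis (2*pi*t)) powr (-s))"
    by (rule continuous_on_powr') (use nzx in \<open>auto intro!: continuous_intros\<close>)
  have "B \<le> A * y powr (1 - s)"
  proof -
    have "((B / A) powr (1 / (1 - s))) powr (1 - s) \<le> y powr (1 - s)"
      using y s by (intro powr_mono2') (auto simp: s_def)
    moreover have "((B / A) powr (1 / (1 - s))) powr (1 - s) = B / A"
      using s B A by (simp add: powr_powr s_def)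
    ultimately show ?thesis using A by (simp add: field_simps)
  qed
  also have "A * y powr (1 - s) = y * ((1 + 2*pi) * y) powr (-s)"
    using y by (simp add: A_def powr_mult powr_add[symmetric] powr_diff mult_ac powr_minus_divide)
  also have "\<dots> = integral {0..y} (\<lambda>t. ((1 + 2*pi) * y) powr (-s))" using y by simp
  also have "\<dots> \<le> integral {0..y} (\<lambda>t. cmod (1 - of_real x * cis (2*pi*t)) powr (-s))"
  proof (rule integral_le)
    show "(\<lambda>t. cmod (1 - of_real x * cis (2*pi*t)) powr (-s)) integrable_on {0..y}"
      by (rule integrable_continuous_interval[OF continuous_on_subset[OF c]]) auto
    fix t assume t: "t \<in> {0..y}"
    have pos: "0 < cmod (1 - of_real x * cis (2*pi*t))"
    proof -
      have "cmod (of_real x * cis (2*pi*t)) < 1" using x by (simp add: norm_mult)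
      thus ?thesis by auto
    qed
    have "cmod (1 - of_real x * cis (2*pi*t)) \<le> (1 - x) + 2*pi*t" by (rule D_upper) (use x t in auto)
    also have "\<dots> \<le> (1 + 2*pi) * y" using t by (simp add: x_def algebra_simps)
    finally show "((1 + 2*pi) * y) powr (-s) \<le> cmod (1 - of_real x * cis (2*pi*t)) powr (-s)"
      using pos s by (intro powr_mono2') (auto simp: s_def)
  qed (rule integrable_const_ivl)
  also have "\<dots> \<le> integral {0..1} (\<lambda>t. cmod (1 - of_real x * cis (2*pi*t)) powr (-s))"
  proof (rule integral_subset_le)
    show "(\<lambda>t. cmod (1 - of_real x * cis (2*pi*t)) powr (-s)) integrable_on {0..y}"
      by (rule integrable_continuous_interval[OF continuous_on_subset[OF c]]) auto
    show "(\<lambda>t. cmod (1 - of_real x * cis (2*pi*t)) powr (-s)) integrable_on {0..1}"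
      by (rule integrable_continuous_interval[OF continuous_on_subset[OF c]]) auto
  qed (use y in auto)
  also have "\<dots> = Mk p l \<rho> \<rho>"
    unfolding Mk_def
  proof (rule integral_cong)
    fix t :: real
    have e2: "1 - cnj (of_real \<rho>) * (of_real \<rho> * cis (2*pi*t)) = 1 - of_real x * cis (2*pi*t)"
      using \<rho>(4) by (metis complex_cnj_complex_of_real mult.assoc of_real_mult)
    have "cmod (of_real x * cis (2*pi*t)) < 1" using x by (simp add: norm_mult)
    hence nz: "1 - of_real x * cis (2*pi*t) \<noteq> 0" by auto
    have "cmod (kernel (of_real \<rho>) (of_real \<rho> * cis (2*pi*t)) ^ l) powr p = cmod (1 - of_real x * cis (2*pi*t)) powr (-(p * real l))"
      using knorm[of "of_real \<rho>" "of_real \<rho> * cis (2*pi*t)" l p, unfolded e2] nz by blast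
    thus "cmod (1 - of_real x * cis (2*pi*t)) powr (-s) = cmod (kernel (of_real \<rho>) (of_real \<rho> * cis (2*pi*t)) ^ l) powr p"
      by (simp add: s_def)
  qed
  finally have "B \<le> Mk p l \<rho> \<rho>" .
  moreover have "ennreal (Mk p l \<rho> \<rho>) \<le> KE p l \<rho>"
  proof -
    have a: "(of_real \<rho> :: complex) \<in> ball 0 1" using \<rho> by simp
    have "ennreal (Mk p l \<rho> \<rho>) = (\<integral>\<^sup>+ t\<in>{0..1::real}. ennreal (cmod (kernel (of_real \<rho>) (of_real \<rho> * cis (2*pi*t)) ^ l) powr p) \<partial>lborel)"
      using nn_circ[OF kernel_facts(1)[OF a], of \<rho> p] \<rho> p by (simp add: Mk_def)
    also have "\<dots> \<le> KE p l \<rho>" unfolding KE_def hardy_pow_def by (rule SUP_upper) (use \<rho> x in auto)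
    finally show ?thesis .
  qed
  ultimately have "ennreal B \<le> KE p l \<rho>" by (meson ennreal_leI order_trans)
  moreover have "1 - \<delta> \<le> \<rho>" using \<rho> y by (simp add: x_def)
  ultimately show ?thesis using that \<rho> by blast
qed


lemma polar2pi: obtains \<phi> where "z = of_real (cmod z) * cis (2*pi*\<phi>)"
proof -
  have "z = of_real (cmod z) * cis (Arg z)"
  proof (cases "z = 0")
    case False thus ?thesis by (simp add: cis_Arg complex_sgn_def scaleR_conv_of_real)
  qed simp
  also have "Arg z = 2*pi*(Arg z / (2*pi))" by simp
  finally show ?thesis by (rule that)
qed

lemma KE_pos_fin:
  assumes "0 \<le> \<rho>" "\<rho> < 1" "0 < p"
  shows "0 < enn2real (KE p l \<rho>)" "KE p l \<rho> = ennreal (enn2real (KE p l \<rho>))"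
proof -
  have a: "(of_real \<rho> :: complex) \<in> ball 0 1" using assms by simp
  note b = kernel_E_bounds[OF a assms(3), of l]
  show "0 < enn2real (KE p l \<rho>)" using b by (simp add: KE_def enn2real_positive_iff)
  show "KE p l \<rho> = ennreal (enn2real (KE p l \<rho>))" using b by (simp add: KE_def)
qed

definition Phi :: "real \<Rightarrow> nat \<Rightarrow> real \<Rightarrow> real \<Rightarrow> complex \<Rightarrow> real" where
  "Phi p l \<rho> t z = cmod (kernel (of_real \<rho> * cis (2*pi*t)) z ^ l) powr p / enn2real (KE p l \<rho>)"

lemma nk_formula:
  assumes \<rho>: "0 \<le> \<rho>" "\<rho> < 1" and p: "0 < p"
  shows "cmod (norm_kernel p l (of_real \<rho> * cis (2*pi*t)) z) powr p = Phi p l \<rho> t z"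
proof -
  define N where "N = hardy_norm p (\<lambda>w. kernel (of_real \<rho> * cis (2*pi*t)) w ^ l)"
  have N: "N = enn2real (KE p l \<rho>) powr (1/p)"
    unfolding N_def hardy_norm_def KE_rot[OF \<rho> p] ..
  have E0: "0 < enn2real (KE p l \<rho>)" by (rule KE_pos_fin(1)[OF \<rho> p])
  have Np: "N powr p = enn2real (KE p l \<rho>)" using E0 p by (simp add: N powr_powr)
  have Npos: "0 < N" using E0 by (simp add: N)
  have "cmod (norm_kernel p l (of_real \<rho> * cis (2*pi*t)) z) = cmod (kernel (of_real \<rho> * cis (2*pi*t)) z ^ l) / N"
    using Npos by (simp add: norm_kernel_def N_def norm_divide)
  hence "cmod (norm_kernel p l (of_real \<rho> * cis (2*pi*t)) z) powr p = cmod (kernel (of_real \<rho> * cis (2*pi*t)) z ^ l) powr p / N powr p"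
    by (simp add: powr_divide)
  thus ?thesis by (simp add: Np Phi_def)
qed

lemma Phi_nonneg: "0 \<le> Phi p l \<rho> t z" by (simp add: Phi_def)

lemma Phi_cont:
  assumes \<rho>: "0 \<le> \<rho>" "\<rho> < 1" and p: "0 < p"
  shows "continuous_on (UNIV \<times> cball 0 1) (\<lambda>(t,z). Phi p l \<rho> t z)"
proof -
  have nz: "1 - cnj (of_real \<rho> * cis (2*pi*t)) * z \<noteq> 0" if "z \<in> cball 0 1" for t z
    using kernel_den(1)[of "of_real \<rho> * cis (2*pi*t)" z] that \<rho> by (simp add: norm_mult)
  have "continuous_on (UNIV \<times> cball 0 1) (\<lambda>y. kernel (of_real \<rho> * cis (2*pi * fst y)) (snd y) ^ l)"
    unfolding kernel_def using nz by (intro continuous_intros) auto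
  hence "continuous_on (UNIV \<times> cball 0 1) (\<lambda>y. cmod (kernel (of_real \<rho> * cis (2*pi * fst y)) (snd y) ^ l) powr p)"
    by (rule cont_powr_norm[OF _ p])
  moreover have "0 < enn2real (KE p l \<rho>)" by (rule KE_pos_fin(1)[OF \<rho> p])
  ultimately have "continuous_on (UNIV \<times> cball 0 1) (\<lambda>y. cmod (kernel (of_real \<rho> * cis (2*pi * fst y)) (snd y) ^ l) powr p / enn2real (KE p l \<rho>))"
    by (intro continuous_on_divide continuous_on_const) auto
  thus ?thesis by (simp add: Phi_def case_prod_unfold)
qed

lemma Phi_int_le1:
  assumes \<rho>: "0 \<le> \<rho>" "\<rho> < 1" and p: "0 < p" and z: "cmod z \<le> 1" and ab: "a \<le> b" "b \<le> a + 1"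
  shows "integral {a..b} (\<lambda>t. Phi p l \<rho> t z) \<le> 1"
proof -
  obtain \<phi> where \<phi>: "z = of_real (cmod z) * cis (2*pi*\<phi>)" by (rule polar2pi)
  define r where "r = cmod z"
  have r: "0 \<le> r" "r \<le> 1" using z by (auto simp: r_def)
  define g where "g = (\<lambda>u. cmod (kernel (of_real \<rho>) (of_real r * cis (2*pi*u)) ^ l) powr p)"
  have a: "(of_real \<rho> :: complex) \<in> ball 0 1" using \<rho> by simp
  have cg: "continuous_on UNIV g" unfolding g_def
    by (rule cont_powr_norm[OF circ_cont[OF kernel_facts(1)[OF a]] p]) (use r in auto)
  have per: "g (x + 1) = g x" for x by (simp add: g_def cis_per)
  have even: "g (- u) = g u" for u
  proof -
    have "kernel (of_real \<rho>) (of_real r * cis (2*pi*(-u))) = cnj (kernel (of_real \<rho>) (of_real r * cis (2*pi*u)))"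
      by (simp add: kernel_def cis_cnj)
    thus ?thesis by (simp add: g_def norm_power)
  qed
  have E0: "0 < enn2real (KE p l \<rho>)" by (rule KE_pos_fin(1)[OF \<rho> p])
  have eq: "Phi p l \<rho> t z = g (t + - \<phi>) / enn2real (KE p l \<rho>)" for t
  proof -
    have "cis (2*pi*\<phi>) * cis (-(2*pi*t)) = cis (2*pi*(\<phi> - t))"
      by (subst cis_mult) (simp add: right_diff_distrib)
    hence "z * cis (-(2*pi*t)) = of_real r * cis (2*pi*(-(t + - \<phi>)))"
      by (subst \<phi>) (simp add: r_def mult.assoc)
    hence "cmod (kernel (of_real \<rho> * cis (2*pi*t)) z ^ l) powr p = g (-(t + - \<phi>))"
      by (simp only: kernel_rot g_def)
    thus ?thesis using even[of "t - \<phi>"] by (simp add: Phi_def)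
  qed
  have "integral {a..b} (\<lambda>t. Phi p l \<rho> t z) = integral {a..b} (\<lambda>t. g (t + - \<phi>)) / enn2real (KE p l \<rho>)"
    by (simp add: eq)
  also have "integral {a..b} (\<lambda>t. g (t + - \<phi>)) = integral {a - \<phi>..b - \<phi>} g"
    using integral_shift_real_ivl[where a="a - \<phi>" and b="b - \<phi>" and c="-\<phi>" and f=g] by simp
  also have "\<dots> \<le> integral {0..1} g"
    by (rule periodic_integral_le[OF cg per]) (use ab in \<open>auto simp: g_def\<close>)
  also have "integral {0..1} g = Mk p l \<rho> r" by (simp add: g_def Mk_def)
  also have "\<dots> \<le> Mk p l \<rho> 1" by (rule Mk_mono[OF \<rho> r p])
  also have "\<dots> \<le> enn2real (KE p l \<rho>)"
  proof -
    have "ennreal (Mk p l \<rho> 1) \<le> ennreal (enn2real (KE p l \<rho>))"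
      using Mk_le_KE[OF \<rho> p, of l] KE_pos_fin(2)[OF \<rho> p, of l] by simp
    moreover have "0 \<le> enn2real (KE p l \<rho>)" by simp
    ultimately show ?thesis by (simp add: ennreal_le_iff)
  qed
  finally show ?thesis using E0 by (simp add: divide_right_mono)
qed


lemma Phi_far:
  assumes \<rho>: "0 \<le> \<rho>" "\<rho> < 1" and p: "0 < p" and z: "cmod z \<le> 1" and \<delta>: "0 < \<delta>" "1 - \<rho> \<le> \<delta> / 2"
    and far: "\<delta> \<le> cmod (z - cis (2*pi*t))"
  shows "Phi p l \<rho> t z \<le> (\<delta>/2) powr (-(p * real l)) / enn2real (KE p l \<rho>)"
proof -
  let ?e = "cis (2*pi*t)"
  have e1: "1 - cnj (of_real \<rho> * ?e) * z = cnj ?e * (?e - of_real \<rho> * z)"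
  proof -
    have "cnj ?e * ?e = 1" by (simp add: cis_cnj cis_mult)
    thus ?thesis by (simp add: algebra_simps)
  qed
  have D: "cmod (1 - cnj (of_real \<rho> * ?e) * z) = cmod (?e - of_real \<rho> * z)"
    unfolding e1 by (simp add: norm_mult)
  have "cmod (?e - z) \<le> cmod (?e - of_real \<rho> * z) + cmod (of_real \<rho> * z - z)"
    using norm_triangle_ineq[of "?e - of_real \<rho> * z" "of_real \<rho> * z - z"] by simp
  moreover have "cmod (of_real \<rho> * z - z) = (1 - \<rho>) * cmod z"
  proof -
    have "of_real \<rho> * z - z = - (of_real (1 - \<rho>) * z)" by (simp add: algebra_simps)
    hence "cmod (of_real \<rho> * z - z) = cmod (of_real (1 - \<rho>) :: complex) * cmod z"
      by (simp only: norm_minus_cancel norm_mult)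
    also have "cmod (of_real (1 - \<rho>) :: complex) = 1 - \<rho>" using \<rho> by (simp only: norm_of_real)
    finally show ?thesis .
  qed
  moreover have "(1 - \<rho>) * cmod z \<le> \<delta> / 2" using \<rho> \<delta> z by (smt (verit) mult_left_le norm_ge_zero)
  moreover have "cmod (?e - z) = cmod (z - ?e)" by (simp add: norm_minus_commute)
  ultimately have low: "\<delta> / 2 \<le> cmod (1 - cnj (of_real \<rho> * ?e) * z)" using far D by linarith
  hence nz: "1 - cnj (of_real \<rho> * ?e) * z \<noteq> 0" using \<delta> by auto
  have "cmod (kernel (of_real \<rho> * ?e) z ^ l) powr p = cmod (1 - cnj (of_real \<rho> * ?e) * z) powr (-(p * real l))"
    by (rule knorm[OF nz])
  also have "\<dots> \<le> (\<delta>/2) powr (-(p * real l))"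
    using low \<delta> p by (intro powr_mono2') auto
  finally show ?thesis unfolding Phi_def using KE_pos_fin(1)[OF \<rho> p, of l] by (simp add: divide_right_mono)
qed

lemma test_pair:
  assumes fin: "finite_measure (\<mu> :: complex measure)"
  shows "pair_sigma_finite lborel \<mu>"
proof -
  interpret F: finite_measure \<mu> by (rule fin)
  show ?thesis by unfold_locales
qed


lemma meas_F:
  assumes \<rho>: "0 \<le> \<rho>" "\<rho> < 1" and p: "0 < p" and sets: "sets \<mu> = sets borel"
  shows "(\<lambda>(t, z). ennreal (Phi p l \<rho> t z) * indicator (cball 0 1) z * indicator {a..b} t) \<in> borel_measurable (lborel \<Otimes>\<^sub>M \<mu>)"
proof -
  have sb: "sets (lborel \<Otimes>\<^sub>M \<mu>) = sets (borel :: (real \<times> complex) measure)"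
  proof -
    have "sets (lborel \<Otimes>\<^sub>M \<mu>) = sets (borel \<Otimes>\<^sub>M (borel :: complex measure))"
      by (rule sets_pair_measure_cong) (simp_all add: sets)
    also have "\<dots> = sets borel" by (rule arg_cong[where f=sets, OF borel_prod])
    finally show ?thesis .
  qed
  have A: "UNIV \<times> cball (0::complex) 1 \<in> sets borel" by (intro borel_closed closed_Times) auto
  have m1: "(\<lambda>y. indicator (UNIV \<times> cball (0::complex) 1) y *\<^sub>R (\<lambda>(t,z). Phi p l \<rho> t z) y) \<in> borel_measurable borel"
    by (rule borel_measurable_continuous_on_indicator[OF A Phi_cont[OF \<rho> p]])
  have m2: "(\<lambda>y. ennreal (indicator (UNIV \<times> cball (0::complex) 1) y *\<^sub>R (\<lambda>(t,z). Phi p l \<rho> t z) y) * indicator ({a..b} \<times> UNIV) y) \<in> borel_measurable (borel :: (real \<times> complex) measure)"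
    using m1 by (intro borel_measurable_times_ennreal measurable_compose[OF _ measurable_ennreal] borel_measurable_indicator) (auto intro: borel_closed closed_Times)
  have eq: "(\<lambda>(t, z). ennreal (Phi p l \<rho> t z) * indicator (cball 0 1) z * indicator {a..b} t)
      = (\<lambda>y. ennreal (indicator (UNIV \<times> cball (0::complex) 1) y *\<^sub>R (\<lambda>(t,z). Phi p l \<rho> t z) y) * indicator ({a..b} \<times> UNIV) y)"
    by (auto simp: indicator_def fun_eq_iff)
  show ?thesis unfolding eq using m2 by (simp add: measurable_cong_sets[OF sb refl])
qed

definition Wset :: "real \<Rightarrow> real \<Rightarrow> real \<Rightarrow> complex set" where
  "Wset a b \<delta> = cball 0 1 \<inter> (\<Union>t\<in>{a..b}. ball (cis (2*pi*t)) \<delta>)"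

lemma Wset_sets: "Wset a b \<delta> \<in> sets borel"
  unfolding Wset_def by (intro sets.Int borel_closed borel_open open_UN) auto

lemma W_lower:
  fixes \<mu> :: "complex measure"
  assumes sets: "sets \<mu> = sets borel" and fin: "finite_measure \<mu>" and p: "0 < p" and s: "p * real l > 1" and C: "0 < C"
    and cond: "\<forall>a\<in>ball 0 1. (\<integral>\<^sup>+ z\<in>cball 0 1. ennreal (cmod (norm_kernel p l a z) powr p) \<partial>\<mu>) \<ge> ennreal C"
    and ab: "a < b" "b \<le> a + 1" and \<delta>: "0 < \<delta>"
  shows "ennreal (C * (b - a)) \<le> emeasure \<mu> (Wset a b \<delta>)"
proof (rule ennreal_le_epsilon)
  fix \<epsilon> :: real assume \<epsilon>: "0 < \<epsilon>"
  interpret F: finite_measure \<mu> by (rule fin)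
  interpret P: pair_sigma_finite lborel \<mu> by unfold_locales
  define Mt where "Mt = measure \<mu> (space \<mu>)"
  have Mt: "0 \<le> Mt" "emeasure \<mu> (space \<mu>) = ennreal Mt" by (auto simp: Mt_def F.emeasure_eq_measure)
  define Bd where "Bd = (\<delta>/2) powr (-(p * real l))"
  have Bd: "0 < Bd" using \<delta> by (simp add: Bd_def)
  obtain \<rho> where \<rho>: "1 - \<delta>/2 \<le> \<rho>" "\<rho> < 1" "0 \<le> \<rho>" "ennreal (Bd * (Mt + 1) / \<epsilon>) \<le> KE p l \<rho>"
    using KE_large[OF p s, of "Bd * (Mt + 1) / \<epsilon>" "\<delta>/2"] Bd Mt \<epsilon> \<delta> by (auto intro!: divide_pos_pos)
  define Ek where "Ek = enn2real (KE p l \<rho>)"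
  have Ek: "0 < Ek" using KE_pos_fin(1)[OF \<rho>(3,2) p] by (simp add: Ek_def)
  have EkB: "Bd * (Mt + 1) / \<epsilon> \<le> Ek"
  proof -
    have "ennreal (Bd * (Mt + 1) / \<epsilon>) \<le> ennreal Ek" using \<rho>(4) KE_pos_fin(2)[OF \<rho>(3,2) p, of l] by (simp add: Ek_def)
    thus ?thesis using Ek by (simp add: ennreal_le_iff)
  qed
  have small: "Bd / Ek * Mt \<le> \<epsilon>"
  proof -
    have "Bd * (Mt + 1) \<le> \<epsilon> * Ek" using EkB \<epsilon> by (simp add: field_simps)
    hence "Bd * Mt \<le> \<epsilon> * Ek" using Bd by (smt (verit) mult_left_mono)
    thus ?thesis using Ek by (simp add: field_simps)
  qed
  define F where "F = (\<lambda>t z. ennreal (Phi p l \<rho> t z) * indicator (cball 0 1) z * indicator {a..b} t)"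
  have mF: "case_prod F \<in> borel_measurable (lborel \<Otimes>\<^sub>M \<mu>)" unfolding F_def by (rule meas_F[OF \<rho>(3,2) p sets])
  have "ennreal (C * (b - a)) = (\<integral>\<^sup>+ t. ennreal C * indicator {a..b} t \<partial>lborel)"
    using ab C by (simp add: nn_integral_cmult_indicator ennreal_mult)
  also have "\<dots> \<le> (\<integral>\<^sup>+ t. (\<integral>\<^sup>+ z. F t z \<partial>\<mu>) \<partial>lborel)"
  proof (rule nn_integral_mono)
    fix t :: real
    show "ennreal C * indicator {a..b} t \<le> (\<integral>\<^sup>+ z. F t z \<partial>\<mu>)"
    proof (cases "t \<in> {a..b}")
      case True
      have inb: "of_real \<rho> * cis (2*pi*t) \<in> ball 0 1" using \<rho> by (simp add: norm_mult)
      have "ennreal C \<le> (\<integral>\<^sup>+ z\<in>cball 0 1. ennreal (cmod (norm_kernel p l (of_real \<rho> * cis (2*pi*t)) z) powr p) \<partial>\<mu>)"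
        using cond inb by blast
      also have "\<dots> = (\<integral>\<^sup>+ z. F t z \<partial>\<mu>)"
        unfolding F_def using True by (intro nn_integral_cong) (simp add: nk_formula[OF \<rho>(3,2) p])
      finally show ?thesis using True by simp
    qed (simp)
  qed
  also have "\<dots> = (\<integral>\<^sup>+ z. (\<integral>\<^sup>+ t. F t z \<partial>lborel) \<partial>\<mu>)"
    by (rule P.Fubini'[OF mF, symmetric])
  also have "\<dots> \<le> (\<integral>\<^sup>+ z. indicator (Wset a b \<delta>) z + ennreal (Bd / Ek) \<partial>\<mu>)"
  proof (rule nn_integral_mono)
    fix z :: complex
    show "(\<integral>\<^sup>+ t. F t z \<partial>lborel) \<le> indicator (Wset a b \<delta>) z + ennreal (Bd / Ek)"
    proof (cases "z \<in> cball 0 1")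
      case False thus ?thesis by (simp add: F_def)
    next
      case True
      have cPhi: "continuous_on UNIV (\<lambda>t. Phi p l \<rho> t z)"
        by (rule continuous_on_compose2[OF Phi_cont[OF \<rho>(3,2) p], where f="\<lambda>t. (t, z)", simplified])
           (use True in \<open>auto intro!: continuous_intros\<close>)
      have hi: "((\<lambda>t. Phi p l \<rho> t z) has_integral integral {a..b} (\<lambda>t. Phi p l \<rho> t z)) {a..b}"
        by (rule integrable_integral, rule integrable_continuous_interval[OF continuous_on_subset[OF cPhi]]) auto
      have "(\<integral>\<^sup>+ t. F t z \<partial>lborel) = (\<integral>\<^sup>+ t. ennreal (Phi p l \<rho> t z) * indicator {a..b} t \<partial>lborel)"
        using True by (simp add: F_def)
      also have "\<dots> = ennreal (integral {a..b} (\<lambda>t. Phi p l \<rho> t z))"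
        by (rule nn_integral_has_integral_lebesgue'[OF _ hi]) (simp add: Phi_nonneg)
      finally have eqI: "(\<integral>\<^sup>+ t. F t z \<partial>lborel) = ennreal (integral {a..b} (\<lambda>t. Phi p l \<rho> t z))" .
      show ?thesis
      proof (cases "z \<in> Wset a b \<delta>")
        case True
        have "integral {a..b} (\<lambda>t. Phi p l \<rho> t z) \<le> 1"
          by (rule Phi_int_le1[OF \<rho>(3,2) p]) (use \<open>z \<in> cball 0 1\<close> ab in auto)
        hence "(\<integral>\<^sup>+ t. F t z \<partial>lborel) \<le> 1" unfolding eqI by (simp add: ennreal_le_1)
        thus ?thesis using True by (simp add: add_increasing2)
      next
        case False
        have far: "\<delta> \<le> cmod (z - cis (2*pi*t))" if "t \<in> {a..b}" for t
        proof (rule ccontr)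
          assume "\<not> \<delta> \<le> cmod (z - cis (2*pi*t))"
          hence "z \<in> ball (cis (2*pi*t)) \<delta>" by (simp add: dist_norm norm_minus_commute)
          thus False using False \<open>z \<in> cball 0 1\<close> that by (auto simp: Wset_def)
        qed
        have "integral {a..b} (\<lambda>t. Phi p l \<rho> t z) \<le> integral {a..b} (\<lambda>t. Bd / Ek)"
          by (rule integral_le[OF has_integral_integrable[OF hi] integrable_const_ivl])
             (use Phi_far[OF \<rho>(3,2) p _ \<delta> _ far] \<rho> \<open>z \<in> cball 0 1\<close> in \<open>auto simp: Bd_def Ek_def\<close>)
        also have "\<dots> = (b - a) * (Bd / Ek)" using ab by simp
        also have "\<dots> \<le> Bd / Ek" using ab Bd Ek by (intro mult_left_le_one_le) auto
        finally show ?thesis unfolding eqI using False by (simp add: ennreal_leI)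
      qed
    qed
  qed
  also have "\<dots> = emeasure \<mu> (Wset a b \<delta>) + ennreal (Bd / Ek) * emeasure \<mu> (space \<mu>)"
  proof -
    have Ws: "Wset a b \<delta> \<in> sets \<mu>" using Wset_sets sets by simp
    have "(\<integral>\<^sup>+ z. indicator (Wset a b \<delta>) z + ennreal (Bd / Ek) \<partial>\<mu>) = (\<integral>\<^sup>+ z. indicator (Wset a b \<delta>) z \<partial>\<mu>) + (\<integral>\<^sup>+ z. ennreal (Bd / Ek) \<partial>\<mu>)"
      using Ws by (intro nn_integral_add) auto
    thus ?thesis using Ws by simp
  qed
  also have "ennreal (Bd / Ek) * emeasure \<mu> (space \<mu>) \<le> ennreal \<epsilon>"
    using small Mt Bd Ek by (simp add: ennreal_mult[symmetric] ennreal_leI)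
  finally show "ennreal (C * (b - a)) \<le> emeasure \<mu> (Wset a b \<delta>) + ennreal \<epsilon>" by (simp add: add_left_mono)
qed


lemma closed_arc_lower:
  fixes \<mu> :: "complex measure"
  assumes sets: "sets \<mu> = sets borel" and fin: "finite_measure \<mu>" and p: "0 < p" and s: "p * real l > 1" and C: "0 < C"
    and cond: "\<forall>a\<in>ball 0 1. (\<integral>\<^sup>+ z\<in>cball 0 1. ennreal (cmod (norm_kernel p l a z) powr p) \<partial>\<mu>) \<ge> ennreal C"
    and ab: "a < b" "b \<le> a + 1"
  shows "ennreal (C * (b - a)) \<le> emeasure \<mu> ((\<lambda>t. cis (2*pi*t)) ` {a..b})"
proof -
  interpret F: finite_measure \<mu> by (rule fin)
  define W where "W n = Wset a b (1 / real (Suc n))" for n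
  have dec: "decseq W"
    unfolding decseq_def W_def Wset_def
  proof (intro allI impI)
    fix m n :: nat assume "m \<le> n"
    hence "1 / real (Suc n) \<le> 1 / real (Suc m)" by (simp add: frac_le)
    thus "cball 0 1 \<inter> (\<Union>t\<in>{a..b}. ball (cis (2*pi*t)) (1 / real (Suc n))) \<subseteq> cball 0 1 \<inter> (\<Union>t\<in>{a..b}. ball (cis (2*pi*t)) (1 / real (Suc m)))"
      by auto
  qed
  have rng: "range W \<subseteq> sets \<mu>" using Wset_sets sets by (auto simp: W_def)
  have inter: "(\<Inter>n. W n) = (\<lambda>t. cis (2*pi*t)) ` {a..b}"
  proof
    show "(\<lambda>t. cis (2*pi*t)) ` {a..b} \<subseteq> (\<Inter>n. W n)"
      by (auto simp: W_def Wset_def)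
    show "(\<Inter>n. W n) \<subseteq> (\<lambda>t. cis (2*pi*t)) ` {a..b}"
    proof
      fix z assume z: "z \<in> (\<Inter>n. W n)"
      have cl: "closed ((\<lambda>t. cis (2*pi*t)) ` {a..b})"
        by (intro compact_imp_closed compact_continuous_image continuous_intros compact_Icc)
      have "z \<in> closure ((\<lambda>t. cis (2*pi*t)) ` {a..b})"
        unfolding closure_approachable
      proof (intro allI impI)
        fix e :: real assume e: "0 < e"
        obtain n :: nat where n: "1 / real (Suc n) < e"
          using e by (metis nat_approx_posE)
        from z have "z \<in> W n" by blast
        then obtain t where t: "t \<in> {a..b}" "z \<in> ball (cis (2*pi*t)) (1 / real (Suc n))" by (auto simp: W_def Wset_def)
        thus "\<exists>y\<in>(\<lambda>t. cis (2*pi*t)) ` {a..b}. dist y z < e" using n by (intro bexI[of _ "cis (2*pi*t)"]) auto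
      qed
      thus "z \<in> (\<lambda>t. cis (2*pi*t)) ` {a..b}" using cl by simp
    qed
  qed
  have "ennreal (C * (b - a)) \<le> (INF n. emeasure \<mu> (W n))"
  proof (rule INF_greatest)
    fix n assume "n \<in> (UNIV :: nat set)"
    show "ennreal (C * (b - a)) \<le> emeasure \<mu> (W n)"
      unfolding W_def by (rule W_lower[OF sets fin p s C cond ab]) simp
  qed
  also have "\<dots> = emeasure \<mu> (\<Inter>n. W n)"
    by (rule INF_emeasure_decseq[OF rng dec]) simp
  finally show ?thesis unfolding inter .
qed


lemma open_arc_eq:
  assumes ab: "a < b" "b \<le> a + 1"
  shows "(\<lambda>t. cis (2*pi*t)) ` {a<..<b} = (\<lambda>t. cis (2*pi*t)) ` {a..b} - {cis (2*pi*a), cis (2*pi*b)}"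
proof
  show "(\<lambda>t. cis (2*pi*t)) ` {a<..<b} \<subseteq> (\<lambda>t. cis (2*pi*t)) ` {a..b} - {cis (2*pi*a), cis (2*pi*b)}"
  proof
    fix z assume "z \<in> (\<lambda>t. cis (2*pi*t)) ` {a<..<b}"
    then obtain t where t: "a < t" "t < b" "z = cis (2*pi*t)" by auto
    have "cis (2*pi*t) \<noteq> cis (2*pi*a)"
    proof
      assume "cis (2*pi*t) = cis (2*pi*a)"
      from cis2pi_inj[OF this] t ab show False by auto
    qed
    moreover have "cis (2*pi*t) \<noteq> cis (2*pi*b)"
    proof
      assume "cis (2*pi*t) = cis (2*pi*b)"
      from cis2pi_inj[OF this] t ab show False by auto
    qed
    ultimately show "z \<in> (\<lambda>t. cis (2*pi*t)) ` {a..b} - {cis (2*pi*a), cis (2*pi*b)}" using t by auto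
  qed
next
  show "(\<lambda>t. cis (2*pi*t)) ` {a..b} - {cis (2*pi*a), cis (2*pi*b)} \<subseteq> (\<lambda>t. cis (2*pi*t)) ` {a<..<b}"
  proof
    fix z assume z: "z \<in> (\<lambda>t. cis (2*pi*t)) ` {a..b} - {cis (2*pi*a), cis (2*pi*b)}"
    then obtain t where t: "a \<le> t" "t \<le> b" "z = cis (2*pi*t)" by auto
    have "t \<noteq> a" "t \<noteq> b" using z t by auto
    thus "z \<in> (\<lambda>t. cis (2*pi*t)) ` {a<..<b}" using t by auto
  qed
qed

lemma arc_sets:
  assumes ab: "a < b" "b \<le> a + 1"
    and I: "(\<lambda>t. cis (2*pi*t)) ` {a<..<b} \<subseteq> I" "I \<subseteq> (\<lambda>t. cis (2*pi*t)) ` {a..b}"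
  shows "I \<in> sets borel" "(\<lambda>t. cis (2*pi*t)) ` {a<..<b} \<in> sets borel"
proof -
  have cl: "closed ((\<lambda>t. cis (2*pi*t)) ` {a..b})"
    by (intro compact_imp_closed compact_continuous_image continuous_intros compact_Icc)
  show O: "(\<lambda>t. cis (2*pi*t)) ` {a<..<b} \<in> sets borel"
    unfolding open_arc_eq[OF ab] using cl by (intro sets.Diff borel_closed) auto
  have "I = (\<lambda>t. cis (2*pi*t)) ` {a<..<b} \<union> (I \<inter> {cis (2*pi*a), cis (2*pi*b)})"
    using I open_arc_eq[OF ab] by blast
  also have "\<dots> \<in> sets borel" using O by (intro sets.Un) (auto intro!: borel_closed finite_imp_closed)
  finally show "I \<in> sets borel" .
qed

lemma cm_closed_arc_le:
  assumes ab: "a < b" "b \<le> a + 1"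
  shows "emeasure circle_measure ((\<lambda>t. cis (2*pi*t)) ` {a..b}) \<le> ennreal (b - a)"
proof -
  let ?E = "(\<lambda>t. cis (2*pi*t)) ` {a..b}"
  have Eb: "?E \<in> sets borel"
    by (intro borel_closed compact_imp_closed compact_continuous_image continuous_intros compact_Icc)
  define k where "k = \<lfloor>a\<rfloor>"
  define a' where "a' = a - real_of_int k"
  define b' where "b' = b - real_of_int k"
  have a': "0 \<le> a'" "a' < 1" unfolding a'_def k_def by linarith+
  have b': "a' < b'" "b' \<le> a' + 1" using ab by (auto simp: a'_def b'_def)
  define P where "P = {t\<in>{0..1}. cis (2*pi*t) \<in> ?E}"
  have sub: "P \<subseteq> ({a'..b'} \<inter> {0..1}) \<union> ({a'-1..b'-1} \<inter> {0..1}) \<union> {1}"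
  proof
    fix t assume "t \<in> P"
    then obtain u where tu: "0 \<le> t" "t \<le> 1" "a \<le> u" "u \<le> b" "cis (2*pi*t) = cis (2*pi*u)" by (auto simp: P_def)
    obtain n :: int where n: "t = u + of_int n" using cis2pi_eq[OF tu(5)] by blast
    define m where "m = n + k"
    have tm: "t = (u - real_of_int k) + of_int m" using n by (simp add: m_def)
    have "a' \<le> u - real_of_int k" "u - real_of_int k \<le> b'" using tu by (auto simp: a'_def b'_def)
    hence "-2 < real_of_int m" "real_of_int m \<le> 1" using tm tu a' b' by linarith+
    hence "m = -1 \<or> m = 0 \<or> m = 1" by linarith
    moreover have "m = 1 \<Longrightarrow> t = 1" using tm tu \<open>a' \<le> u - real_of_int k\<close> a' by simp
    ultimately show "t \<in> ({a'..b'} \<inter> {0..1}) \<union> ({a'-1..b'-1} \<inter> {0..1}) \<union> {1}"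
      using tm tu \<open>a' \<le> u - real_of_int k\<close> \<open>u - real_of_int k \<le> b'\<close> by auto
  qed
  have "emeasure circle_measure ?E = emeasure lborel P" unfolding P_def by (rule cm_emeasure[OF Eb])
  also have "\<dots> \<le> emeasure lborel (({a'..b'} \<inter> {0..1}) \<union> ({a'-1..b'-1} \<inter> {0..1}) \<union> {1})"
    by (rule emeasure_mono[OF sub]) auto
  also have "\<dots> \<le> emeasure lborel ({a'..b'} \<inter> {0..1}) + emeasure lborel ({a'-1..b'-1} \<inter> {0..1}) + emeasure lborel {1::real}"
    by (intro order_trans[OF emeasure_subadditive] add_right_mono) auto
  also have "\<dots> = ennreal (b - a)"
  proof (cases "b' \<le> 1")
    case True
    have "{a'..b'} \<inter> {0..1} = {a'..b'}" using True a' by auto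
    moreover have "{a'-1..b'-1} \<inter> {0..1} \<subseteq> {0}" using True by auto
    hence "emeasure lborel ({a'-1..b'-1} \<inter> {0..1}) = 0"
      by (metis emeasure_lborel_countable countable_finite finite.emptyI finite_insert finite_subset countable_subset)
    ultimately show ?thesis using b' by (simp add: a'_def b'_def)
  next
    case False
    have "{a'..b'} \<inter> {0..1} = {a'..1}" using False a' by auto
    moreover have "{a'-1..b'-1} \<inter> {0..1} = {0..b'-1}" using False b' a' by auto
    ultimately have "emeasure lborel ({a'..b'} \<inter> {0..1}) + emeasure lborel ({a'-1..b'-1} \<inter> {0..1}) = ennreal (1 - a') + ennreal (b' - 1)"
      using a' False by simp
    also have "\<dots> = ennreal (b' - a')" using a' False by (subst ennreal_plus[symmetric]) auto
    finally show ?thesis by (simp add: a'_def b'_def)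
  qed
  finally show ?thesis .
qed


lemma ii_to_iii:
  fixes \<mu> :: "complex measure"
  assumes sets: "sets \<mu> = sets borel" and fin: "finite_measure \<mu>" and p: "0 < p" and s: "p * real l > 1" and C: "0 < C"
    and cond: "\<forall>a\<in>ball 0 1. (\<integral>\<^sup>+ z\<in>cball 0 1. ennreal (cmod (norm_kernel p l a z) powr p) \<partial>\<mu>) \<ge> ennreal C"
    and I: "is_arc I"
  shows "emeasure \<mu> I \<ge> ennreal C * emeasure circle_measure I"
proof -
  obtain a b where ab: "a < b" "b \<le> a + 1" and O: "(\<lambda>t. cis (2*pi*t)) ` {a<..<b} \<subseteq> I" and E: "I \<subseteq> (\<lambda>t. cis (2*pi*t)) ` {a..b}"
    using I unfolding is_arc_def by blast
  have Is: "I \<in> sets \<mu>" using arc_sets(1)[OF ab O E] sets by simp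
  have low: "ennreal (C * (b - a)) \<le> emeasure \<mu> I"
  proof (rule ennreal_le_epsilon)
    fix \<epsilon> :: real assume \<epsilon>: "0 < \<epsilon>"
    define \<eta> where "\<eta> = min ((b - a) / 4) (\<epsilon> / (2 * C))"
    have \<eta>1: "0 < \<eta>" using ab \<epsilon> C by (simp add: \<eta>_def)
    have \<eta>2: "\<eta> \<le> (b - a) / 4" "\<eta> \<le> \<epsilon> / (2 * C)" unfolding \<eta>_def by (rule min.cobounded1, rule min.cobounded2)
    have "2 * C * \<eta> \<le> 2 * C * (\<epsilon> / (2 * C))" using \<eta>2 C by (intro mult_left_mono) auto
    hence "2 * C * \<eta> \<le> \<epsilon>" using C by simp
    note \<eta> = \<eta>1 \<eta>2(1) this
    have ab': "a + \<eta> < b - \<eta>" "b - \<eta> \<le> (a + \<eta>) + 1" using \<eta> ab by auto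
    have "ennreal (C * ((b - \<eta>) - (a + \<eta>))) \<le> emeasure \<mu> ((\<lambda>t. cis (2*pi*t)) ` {a + \<eta>..b - \<eta>})"
      by (rule closed_arc_lower[OF sets fin p s C cond ab'])
    also have "\<dots> \<le> emeasure \<mu> I"
    proof (rule emeasure_mono[OF _ Is])
      have "{a + \<eta>..b - \<eta>} \<subseteq> {a<..<b}" using \<eta> by auto
      thus "(\<lambda>t. cis (2*pi*t)) ` {a + \<eta>..b - \<eta>} \<subseteq> I" using O by blast
    qed
    finally have L: "ennreal (C * ((b - \<eta>) - (a + \<eta>))) \<le> emeasure \<mu> I" .
    have "ennreal (C * (b - a)) = ennreal (C * ((b - \<eta>) - (a + \<eta>)) + 2 * C * \<eta>)" by (simp add: algebra_simps)
    also have "\<dots> = ennreal (C * ((b - \<eta>) - (a + \<eta>))) + ennreal (2 * C * \<eta>)"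
      using C \<eta> ab' by (intro ennreal_plus) auto
    also have "\<dots> \<le> emeasure \<mu> I + ennreal \<epsilon>" using L \<eta>(3) by (intro add_mono ennreal_leI) auto
    finally show "ennreal (C * (b - a)) \<le> emeasure \<mu> I + ennreal \<epsilon>" .
  qed
  have "emeasure circle_measure I \<le> emeasure circle_measure ((\<lambda>t. cis (2*pi*t)) ` {a..b})"
  proof -
    have Eb: "(\<lambda>t. cis (2*pi*t)) ` {a..b} \<in> sets borel"
      by (intro borel_closed compact_imp_closed compact_continuous_image continuous_intros compact_Icc)
    show ?thesis by (rule emeasure_mono[OF E]) (simp add: Eb)
  qed
  also have "\<dots> \<le> ennreal (b - a)" by (rule cm_closed_arc_le[OF ab])
  finally have "ennreal C * emeasure circle_measure I \<le> ennreal C * ennreal (b - a)" by (rule mult_left_mono) simp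
  also have "\<dots> = ennreal (C * (b - a))" using C by (simp add: ennreal_mult')
  finally show ?thesis using low by simp
qed

lemma iii_to_i:
  fixes \<mu> :: "complex measure"
  assumes sets: "sets \<mu> = sets borel" and p: "0 < p" and C: "0 < C"
    and arcs: "\<And>I. is_arc I \<Longrightarrow> emeasure \<mu> I \<ge> ennreal C * emeasure circle_measure I"
    and cf: "continuous_on (cball 0 1) f" and hf: "in_hardy p f"
  shows "(\<integral>\<^sup>+ z\<in>cball 0 1. ennreal (cmod (f z) powr p) \<partial>\<mu>) \<ge> ennreal C * hardy_pow p f"
proof -
  have hol: "f holomorphic_on ball 0 1" using hf by (simp add: in_hardy_def)
  have "ennreal C * hardy_pow p f \<le> ennreal C * ennreal (integral {0..1} (\<lambda>t. cmod (f (cis (2*pi*t))) powr p))"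
    by (intro mult_left_mono hardy_pow_le[OF cf hol p]) simp
  also have "\<dots> = ennreal (C * integral {0..1} (\<lambda>t. cmod (f (cis (2*pi*t))) powr p))"
    using C by (simp add: ennreal_mult')
  also have "\<dots> \<le> (\<integral>\<^sup>+ z\<in>cball 0 1. ennreal (cmod (f z) powr p) \<partial>\<mu>)"
    by (rule arc_lower[OF sets C arcs cont_powr_norm[OF cf p]]) simp_all
  finally show ?thesis .
qed

lemma i_to_ii:
  fixes \<mu> :: "complex measure"
  assumes p: "0 < p" and a: "a \<in> ball 0 1"
    and cond: "\<forall>f. continuous_on (cball 0 1) f \<and> in_hardy p f \<longrightarrow>
              (\<integral>\<^sup>+ z\<in>cball 0 1. ennreal (cmod (f z) powr p) \<partial>\<mu>) \<ge> ennreal C * hardy_pow p f"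
  shows "(\<integral>\<^sup>+ z\<in>cball 0 1. ennreal (cmod (norm_kernel p l a z) powr p) \<partial>\<mu>) \<ge> ennreal C"
proof -
  note nk = norm_kernel_facts[OF a p, of l]
  have "in_hardy p (norm_kernel p l a)" using nk by (simp add: in_hardy_def)
  with cond nk show ?thesis by auto
qed

theorem theorem2p1:
  fixes p :: real and \<mu> :: "complex measure" and l :: nat
  assumes "0 < p"
    and "sets \<mu> = sets borel"
    and "finite_measure \<mu>"
    and "emeasure \<mu> (- cball 0 1) = 0"
    and "0 < l" and "p * real l > 1"
  defines "cond_i \<equiv> (\<exists>C>0. \<forall>f. continuous_on (cball 0 1) f \<and> in_hardy p f \<longrightarrow>
              (\<integral>\<^sup>+ z\<in>cball 0 1. ennreal (cmod (f z) powr p) \<partial>\<mu>) \<ge> ennreal C * hardy_pow p f)"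
    and "cond_ii \<equiv> (\<exists>C>0. \<forall>a\<in>ball 0 1.
              (\<integral>\<^sup>+ z\<in>cball 0 1. ennreal (cmod (norm_kernel p l a z) powr p) \<partial>\<mu>) \<ge> ennreal C)"
    and "cond_iii \<equiv> (\<exists>C>0. \<forall>I. is_arc I \<longrightarrow> emeasure \<mu> I \<ge> ennreal C * emeasure circle_measure I)"
  shows "(cond_i \<longleftrightarrow> cond_ii) \<and> (cond_ii \<longleftrightarrow> cond_iii)"
proof -
  have i_ii: "cond_i \<Longrightarrow> cond_ii"
    unfolding assms(7,8) using i_to_ii[OF assms(1)] by blast
  have ii_iii: "cond_ii \<Longrightarrow> cond_iii"
    unfolding assms(8,9) using ii_to_iii[OF assms(2,3,1,6)] by blast
  have iii_i: "cond_iii \<Longrightarrow> cond_i"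
    unfolding assms(7,9) using iii_to_i[OF assms(2,1)] by blast
  show ?thesis using i_ii ii_iii iii_i by blast
qed

end
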